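(* Let $n_T,n_R$ be positive integers, $m=\min\{n_T,n_R\}$, let $\Phi_T,\Phi_R$ be Hermitian positive definite of sizes $n_T,n_R$, $H=\Phi_R^{1/2}H_0\Phi_T^{1/2}$ with $H_0\in\mathbb{C}^{n_R\times n_T}$ having i.i.d. zero-mean unit-variance circularly symmetric complex Gaussian entries, and $\Theta=HH^\dagger$ if $n_R\le n_T$, $\Theta=H^\dagger H$ otherwise. Fix $\gamma>0$ and a positive integer $N_c$, and for $\rho\in[0,1]$, $\beta\in(0,n_T]$ let $$\tilde E_0(\rho,\beta,N_c)=(1+\rho)(n_T-\beta)+n_T(1+\rho)\ln(\beta/n_T)-\frac1{N_c}\ln\mathbb{E}\Big\{\det\Big(I_m+\frac{\gamma\Theta}{\beta(1+\rho)}\Big)^{-N_c\rho}\Big\}.$$ For each $\rho\in[0,1]$, let $\beta^*(\rho)$ be the value of $\beta\in[0,n_T]$ maximizing $\tilde E_0(\rho,\beta,N_c)$. Then $\beta^*(\rho)$ is a solution of $\partial\tilde E_0(\rho,\beta,N_c)/\partial\beta=0$ and $0<\beta^*(\rho)\le n_T$. *)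

theory Defs
  imports "HOL-Probability.Probability" "Jordan_Normal_Form.Matrix" "Jordan_Normal_Form.Determinant"
begin

definition cadj :: "complex mat \<Rightarrow> complex mat" where
  "cadj A = mat (dim_col A) (dim_row A) (\<lambda>(i,j). cnj (A $$ (j,i)))"

definition hermitian_mat :: "nat \<Rightarrow> complex mat \<Rightarrow> bool" where
  "hermitian_mat n A \<longleftrightarrow> A \<in> carrier_mat n n \<and> cadj A = A"

definition hpd_mat :: "nat \<Rightarrow> complex mat \<Rightarrow> bool" where
  "hpd_mat n A \<longleftrightarrow> hermitian_mat n A \<and>
     (\<forall>v \<in> carrier_vec n. v \<noteq> 0\<^sub>v n \<longrightarrow>
        (let q = (\<Sum>i<n. cnj (v $ i) * (A *\<^sub>v v) $ i) in Im q = 0 \<and> Re q > 0))"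

definition hpd_sqrt :: "nat \<Rightarrow> complex mat \<Rightarrow> complex mat" where
  "hpd_sqrt n A = (THE S. hpd_mat n S \<and> S * S = A)"

(* circularly symmetric complex Gaussian, zero mean, unit variance E|z|^2 = 1:
   density exp(-|z|^2)/pi w.r.t. Lebesgue measure on C = R^2 *)
definition cgauss :: "complex measure" where
  "cgauss = density lborel (\<lambda>z. ennreal (exp (- (cmod z * cmod z)) / pi))"

definition H0_space :: "nat \<Rightarrow> nat \<Rightarrow> (nat \<times> nat \<Rightarrow> complex) measure" where
  "H0_space nR nT = PiM ({..<nR} \<times> {..<nT}) (\<lambda>_. cgauss)"

definition H0_of :: "nat \<Rightarrow> nat \<Rightarrow> (nat \<times> nat \<Rightarrow> complex) \<Rightarrow> complex mat" where
  "H0_of nR nT \<omega> = mat nR nT (\<lambda>ij. \<omega> ij)"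

definition H_of :: "nat \<Rightarrow> nat \<Rightarrow> complex mat \<Rightarrow> complex mat \<Rightarrow> (nat \<times> nat \<Rightarrow> complex) \<Rightarrow> complex mat" where
  "H_of nT nR PhiT PhiR \<omega> = hpd_sqrt nR PhiR * H0_of nR nT \<omega> * hpd_sqrt nT PhiT"

definition Theta_of :: "nat \<Rightarrow> nat \<Rightarrow> complex mat \<Rightarrow> complex mat \<Rightarrow> (nat \<times> nat \<Rightarrow> complex) \<Rightarrow> complex mat" where
  "Theta_of nT nR PhiT PhiR \<omega> =
     (let H = H_of nT nR PhiT PhiR \<omega> in if nR \<le> nT then H * cadj H else cadj H * H)"

definition E0t :: "nat \<Rightarrow> nat \<Rightarrow> complex mat \<Rightarrow> complex mat \<Rightarrow> real \<Rightarrow> nat \<Rightarrow> real \<Rightarrow> real \<Rightarrow> real" where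
  "E0t nT nR PhiT PhiR \<gamma> Nc \<rho> \<beta> =
     (1 + \<rho>) * (real nT - \<beta>) + real nT * (1 + \<rho>) * ln (\<beta> / real nT)
     - (1 / real Nc) * ln (\<integral>\<omega>. (Re (det (1\<^sub>m (min nT nR) +
            complex_of_real (\<gamma> / (\<beta> * (1 + \<rho>))) \<cdot>\<^sub>m Theta_of nT nR PhiT PhiR \<omega>)))
            powr (- real Nc * \<rho>) \<partial>H0_space nR nT)"

end

theory Submission
  imports Defs "Jordan_Normal_Form.Char_Poly"
begin


lemma mult_entry:
  assumes "A \<in> carrier_mat r k" "B \<in> carrier_mat k c" "i < r" "j < c"
  shows "(A * B) $$ (i,j) = (\<Sum>l\<in>{0..<k}. A $$ (i,l) * B $$ (l,j))"
  using assms by (auto simp: scalar_prod_def intro!: sum.cong)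

lemma cadj_dims[simp]: "dim_row (cadj A) = dim_col A" "dim_col (cadj A) = dim_row A"
  by (simp_all add: cadj_def)

lemma cadj_index[simp]: "i < dim_col A \<Longrightarrow> j < dim_row A \<Longrightarrow> cadj A $$ (i,j) = cnj (A $$ (j,i))"
  by (simp add: cadj_def)

lemma cadj_carrier[simp]: "A \<in> carrier_mat r c \<Longrightarrow> cadj A \<in> carrier_mat c r"
  unfolding cadj_def carrier_mat_def by simp

lemma cadj_cadj[simp]: "cadj (cadj A) = A"
  by (rule eq_matI) simp_all

lemma cadj_mult:
  assumes "A \<in> carrier_mat r k" "B \<in> carrier_mat k c"
  shows "cadj (A * B) = cadj B * cadj A"
proof (rule eq_matI)
  fix i j assume ij: "i < dim_row (cadj B * cadj A)" "j < dim_col (cadj B * cadj A)"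
  then have i: "i < c" and j: "j < r" using assms by auto
  have "cadj (A * B) $$ (i,j) = cnj ((A * B) $$ (j,i))"
    using assms i j by simp
  also have "\<dots> = cnj (\<Sum>l\<in>{0..<k}. A $$ (j,l) * B $$ (l,i))"
    using mult_entry[OF assms j i] by simp
  also have "\<dots> = (\<Sum>l\<in>{0..<k}. cadj B $$ (i,l) * cadj A $$ (l,j))"
    using assms i j by (auto simp: mult.commute intro!: sum.cong)
  also have "\<dots> = (cadj B * cadj A) $$ (i,j)"
    using mult_entry[of "cadj B" c k "cadj A" r i j] assms i j by simp
  finally show "cadj (A * B) $$ (i,j) = (cadj B * cadj A) $$ (i,j)" .
qed (use assms in simp_all)

lemma cadj_one[simp]: "cadj (1\<^sub>m n) = 1\<^sub>m n"
  by (rule eq_matI) simp_all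

definition unitary :: "nat \<Rightarrow> complex mat \<Rightarrow> bool" where
  "unitary n U \<longleftrightarrow> U \<in> carrier_mat n n \<and> cadj U * U = 1\<^sub>m n"

lemma unitary_right:
  assumes "unitary n U" shows "U * cadj U = 1\<^sub>m n"
  using assms mat_mult_left_right_inverse[of "cadj U" n U] unfolding unitary_def by auto

lemma unitary_mult:
  assumes "unitary n U" "unitary n V" shows "unitary n (U * V)"
proof -
  have U: "U \<in> carrier_mat n n" and V: "V \<in> carrier_mat n n" using assms unitary_def by auto
  have cU: "cadj U \<in> carrier_mat n n" and cV: "cadj V \<in> carrier_mat n n" using U V by auto
  have "cadj (U * V) * (U * V) = cadj V * cadj U * (U * V)"
    using cadj_mult[OF U V] by simp
  also have "\<dots> = cadj V * (cadj U * (U * V))" using assoc_mult_mat[OF cV cU mult_carrier_mat[OF U V]] .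
  also have "cadj U * (U * V) = (cadj U * U) * V" using assoc_mult_mat[OF cU U V] by simp
  also have "cadj U * U = 1\<^sub>m n" using assms unitary_def by auto
  also have "cadj V * (1\<^sub>m n * V) = 1\<^sub>m n" using assms V unitary_def by auto
  finally show ?thesis using U V unfolding unitary_def by auto
qed


lemma sd1: "(i::nat) < n \<Longrightarrow> (\<Sum>l\<in>{0..<n}. (if i = l then 1 else 0) * (X l :: complex)) = X i"
proof -
  assume i: "i < n"
  have "(\<Sum>l\<in>{0..<n}. (if i = l then 1 else 0) * X l) = (\<Sum>l\<in>{0..<n}. if i = l then X l else 0)"
    by (rule sum.cong) auto
  also have "\<dots> = X i" using i by (subst sum.delta') auto
  finally show ?thesis .
qed

lemma sd2: "(j::nat) < n \<Longrightarrow> (\<Sum>l\<in>{0..<n}. (if l = j then 1 else 0) * (X l :: complex)) = X j"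
proof -
  assume i: "j < n"
  have "(\<Sum>l\<in>{0..<n}. (if l = j then 1 else 0) * X l) = (\<Sum>l\<in>{0..<n}. if l = j then X l else 0)"
    by (rule sum.cong) auto
  also have "\<dots> = X j" using i by (subst sum.delta) auto
  finally show ?thesis .
qed

lemma cnj_mult_self: "cnj z * z = complex_of_real ((cmod z)\<^sup>2)"
  by (simp add: mult.commute complex_mult_cnj cmod_power2)

lemma householder:
  assumes kn: "k < n" and y0: "\<forall>i<k. y i = 0" and ynz: "\<exists>i<n. y i \<noteq> (0::complex)"
  shows "\<exists>V. unitary n V \<and> (\<forall>i<n. \<forall>j<k. V $$ (i,j) = (if i = j then 1 else 0))
            \<and> (\<exists>\<alpha>. \<forall>i<n. V $$ (i,k) = \<alpha> * y i)"
proof -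
  define N where "N = (\<Sum>i\<in>{0..<n}. (cmod (y i))\<^sup>2)"
  obtain i0 where i0: "i0 < n" "y i0 \<noteq> 0" using ynz by auto
  have "(cmod (y i0))\<^sup>2 \<le> N" unfolding N_def
    by (rule member_le_sum) (use i0 in auto)
  moreover have "(cmod (y i0))\<^sup>2 > 0" using i0 by simp
  ultimately have Npos: "N > 0" by linarith
  define p where "p = y k"
  define \<theta> where "\<theta> = (if p = 0 then 1 else cnj p / complex_of_real (cmod p))"
  have th1: "cmod \<theta> = 1" unfolding \<theta>_def by (simp add: norm_divide)
  have thp: "\<theta> * p = complex_of_real (cmod p)"
    using cnj_mult_self[of p] unfolding \<theta>_def by (auto simp: power2_eq_square field_simps)
  define \<alpha> where "\<alpha> = \<theta> / complex_of_real (sqrt N)"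
  define f where "f i = \<alpha> * y i" for i
  have f0: "\<And>i. i < k \<Longrightarrow> f i = 0" using y0 unfolding f_def by simp
  have fk: "f k = complex_of_real (cmod p / sqrt N)"
    unfolding f_def \<alpha>_def p_def[symmetric] using thp by (simp add: field_simps)
  have cmf: "(cmod (f i))\<^sup>2 = (cmod (y i))\<^sup>2 / N" for i
    unfolding f_def \<alpha>_def using th1 Npos by (simp add: norm_mult norm_divide power_divide)
  have fnorm: "(\<Sum>i\<in>{0..<n}. (cmod (f i))\<^sup>2) = 1"
    unfolding cmf using Npos by (simp add: sum_divide_distrib[symmetric] N_def)
  define e where "e i = (if i = k then 1 else (0::complex))" for i
  show ?thesis
  proof (cases "\<forall>i<n. f i = e i")
    case True
    show ?thesis
    proof (intro exI conjI)
      show "unitary n (1\<^sub>m n)" unfolding unitary_def by simp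
      show "\<forall>i<n. \<forall>j<k. 1\<^sub>m n $$ (i, j) = (if i = j then 1 else 0)" using kn by auto
      show "\<forall>i<n. 1\<^sub>m n $$ (i, k) = \<alpha> * y i" using True kn unfolding e_def f_def by auto
    qed
  next
    case False
    define w where "w i = e i - f i" for i
    define W where "W = (\<Sum>i\<in>{0..<n}. (cmod (w i))\<^sup>2)"
    obtain i1 where i1: "i1 < n" "w i1 \<noteq> 0" using False unfolding w_def by auto
    have "(cmod (w i1))\<^sup>2 \<le> W" unfolding W_def
      by (rule member_le_sum) (use i1 in auto)
    moreover have "(cmod (w i1))\<^sup>2 > 0" using i1 by simp
    ultimately have Wpos: "W > 0" by linarith
    define fr where "fr = cmod p / sqrt N"
    have fk': "f k = complex_of_real fr" using fk fr_def by simp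
    have wsq: "(cmod (w i))\<^sup>2 = (if i = k then (1 - fr)\<^sup>2 else (cmod (f i))\<^sup>2)" for i
    proof (cases "i = k")
      case True
      then have "w i = complex_of_real (1 - fr)" unfolding w_def e_def using fk' by simp
      then have "cmod (w i) = \<bar>1 - fr\<bar>" by (simp only: norm_of_real)
      then show ?thesis using True by simp
    next
      case False
      then show ?thesis unfolding w_def e_def by simp
    qed
    have "W = (\<Sum>i\<in>{0..<n}. (if i = k then (1 - fr)\<^sup>2 - (cmod (f i))\<^sup>2 else 0) + (cmod (f i))\<^sup>2)"
      unfolding W_def wsq by (intro sum.cong) auto
    also have "\<dots> = (1 - fr)\<^sup>2 - (cmod (f k))\<^sup>2 + 1"
      using kn fnorm by (simp add: sum.distrib sum.delta')
    also have "(cmod (f k))\<^sup>2 = fr\<^sup>2" using fk' by (simp add: norm_of_real power2_abs)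
    finally have Weq: "W = 2 - 2 * fr" by (simp add: power2_eq_square algebra_simps)
    define c where "c = complex_of_real (2 / W)"
    define V where "V = mat n n (\<lambda>(i,j). (if i = j then 1 else 0) - c * w i * cnj (w j))"
    have Vc: "V \<in> carrier_mat n n" unfolding V_def by simp
    have Vij: "V $$ (i,j) = (if i = j then 1 else 0) - c * w i * cnj (w j)" if "i < n" "j < n" for i j
      unfolding V_def using that by simp
    have cnjc: "cnj c = c" unfolding c_def by simp
    have adjV: "cadj V = V"
    proof (rule eq_matI)
      fix i j assume "i < dim_row V" "j < dim_col V"
      then have i: "i < n" and j: "j < n" using Vc by auto
      show "cadj V $$ (i,j) = V $$ (i,j)" using i j Vc
        by (simp add: Vij cnjc mult.commute mult.left_commute)
    qed (use Vc in simp_all)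
    have wsum: "(\<Sum>l\<in>{0..<n}. cnj (w l) * w l) = complex_of_real W"
      unfolding W_def by (simp add: cnj_mult_self)
    have cW: "c * c * complex_of_real W = 2 * c" unfolding c_def using Wpos
      by (simp add: field_simps)
    have VV: "V * V = 1\<^sub>m n"
    proof (rule eq_matI)
      fix i j assume "i < dim_row (1\<^sub>m n)" "j < dim_col (1\<^sub>m n)"
      then have i: "i < n" and j: "j < n" by auto
      have "(V * V) $$ (i,j) = (\<Sum>l\<in>{0..<n}. V $$ (i,l) * V $$ (l,j))"
        by (rule mult_entry[OF Vc Vc i j])
      also have "\<dots> = (\<Sum>l\<in>{0..<n}. (if i = l then 1 else 0) * (if l = j then 1 else 0)
            - (if l = j then 1 else 0) * (c * w i * cnj (w l))
            - (if i = l then 1 else 0) * (c * w l * cnj (w j))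
            + (c * c * w i * cnj (w j)) * (cnj (w l) * w l))"
        by (rule sum.cong) (simp_all add: Vij i j algebra_simps)
      also have "\<dots> = (\<Sum>l\<in>{0..<n}. (if i = l then 1 else 0) * (if l = j then 1 else 0))
            - (\<Sum>l\<in>{0..<n}. (if l = j then 1 else 0) * (c * w i * cnj (w l)))
            - (\<Sum>l\<in>{0..<n}. (if i = l then 1 else 0) * (c * w l * cnj (w j)))
            + (c * c * w i * cnj (w j)) * (\<Sum>l\<in>{0..<n}. cnj (w l) * w l)"
        by (simp add: sum.distrib sum_subtractf sum_distrib_left)
      also have "\<dots> = (if i = j then 1 else 0) - c * w i * cnj (w j) - c * w i * cnj (w j)
            + (c * c * complex_of_real W) * (w i * cnj (w j))"
        by (simp only: sd1[OF i] sd2[OF j] wsum) (simp add: algebra_simps)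
      also have "\<dots> = (if i = j then 1 else 0)" unfolding cW by (simp add: algebra_simps)
      also have "\<dots> = 1\<^sub>m n $$ (i,j)" using i j by simp
      finally show "(V * V) $$ (i,j) = 1\<^sub>m n $$ (i,j)" .
    qed (use Vc in auto)
    have unit: "unitary n V" unfolding unitary_def using Vc VV adjV by simp
    have wj0: "w j = 0" if "j < k" for j unfolding w_def e_def using f0[OF that] that by simp
    have colj: "\<forall>i<n. \<forall>j<k. V $$ (i,j) = (if i = j then 1 else 0)"
      using kn by (auto simp: Vij wj0)
    have frne: "fr \<noteq> 1" using Weq Wpos by auto
    have cwk: "c * cnj (w k) = 1"
      unfolding c_def w_def e_def fk' Weq using frne
      by (simp add: field_simps)
    have colk: "\<forall>i<n. V $$ (i,k) = \<alpha> * y i"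
    proof (intro allI impI)
      fix i assume i: "i < n"
      have "V $$ (i,k) = e i - w i * (c * cnj (w k))"
        using Vij[OF i kn] unfolding e_def by (simp add: algebra_simps)
      also have "\<dots> = f i" unfolding cwk by (simp add: w_def)
      finally show "V $$ (i,k) = \<alpha> * y i" unfolding f_def .
    qed
    show ?thesis using unit colj colk by blast
  qed
qed


lemma exists_eigen:
  fixes A :: "complex mat"
  assumes A: "A \<in> carrier_mat n n" and n: "n > 0"
  shows "\<exists>\<mu> v. v \<in> carrier_vec n \<and> v \<noteq> 0\<^sub>v n \<and> A *\<^sub>v v = \<mu> \<cdot>\<^sub>v v"
proof -
  obtain as where cp: "char_poly A = (\<Prod>a\<leftarrow>as. [:- a, 1:])" and len: "length as = n"
    using char_poly_factorized[OF A] by blast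
  obtain a rest where as: "as = a # rest" using len n by (cases as) auto
  have "poly (char_poly A) a = 0" unfolding cp as by (simp add: algebra_simps)
  then have "eigenvalue A a" using eigenvalue_root_char_poly[OF A] by simp
  then obtain v where "eigenvector A v a" unfolding eigenvalue_def by blast
  then show ?thesis unfolding eigenvector_def using A by auto
qed

lemma herm_entry:
  assumes "hermitian_mat n A" "i < n" "j < n"
  shows "A $$ (i,j) = cnj (A $$ (j,i))"
proof -
  have A: "A \<in> carrier_mat n n" and "cadj A = A" using assms unfolding hermitian_mat_def by auto
  then have "A $$ (i,j) = cadj A $$ (i,j)" by simp
  also have "\<dots> = cnj (A $$ (j,i))" using A assms by simp
  finally show ?thesis .
qed

lemma unitary_conj_herm:
  assumes U: "unitary n U" and A: "hermitian_mat n A"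
  shows "hermitian_mat n (cadj U * A * U)"
proof -
  have Uc: "U \<in> carrier_mat n n" using U unitary_def by auto
  have Ac: "A \<in> carrier_mat n n" and AA: "cadj A = A" using A hermitian_mat_def by auto
  have cU: "cadj U \<in> carrier_mat n n" using Uc by simp
  have c1: "cadj U * A \<in> carrier_mat n n" using cU Ac by simp
  have "cadj (cadj U * A * U) = cadj U * cadj (cadj U * A)" using cadj_mult[OF c1 Uc] .
  also have "cadj (cadj U * A) = cadj A * cadj (cadj U)" using cadj_mult[OF cU Ac] .
  also have "cadj U * (cadj A * cadj (cadj U)) = cadj U * A * U"
    using AA assoc_mult_mat[OF cU Ac Uc] by simp
  finally show ?thesis unfolding hermitian_mat_def using c1 Uc by simp
qed

lemma spectral_step:
  assumes B: "hermitian_mat n B" and kn: "k < n"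
    and diag: "\<forall>i<n. \<forall>j<k. i \<noteq> j \<longrightarrow> B $$ (i,j) = 0"
  shows "\<exists>V. unitary n V \<and> (\<forall>i<n. \<forall>j<Suc k. i \<noteq> j \<longrightarrow> (cadj V * B * V) $$ (i,j) = 0)"
proof -
  have Bc: "B \<in> carrier_mat n n" using B hermitian_mat_def by auto
  define C where "C = mat (n-k) (n-k) (\<lambda>(i,j). B $$ (i+k, j+k))"
  have Cc: "C \<in> carrier_mat (n-k) (n-k)" unfolding C_def by simp
  obtain \<mu> v where v: "v \<in> carrier_vec (n-k)" "v \<noteq> 0\<^sub>v (n-k)" "C *\<^sub>v v = \<mu> \<cdot>\<^sub>v v"
    using exists_eigen[OF Cc] kn by auto
  define y where "y i = (if i < k then 0 else v $ (i-k))" for i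
  have y0: "\<forall>i<k. y i = 0" unfolding y_def by simp
  obtain i0 where i0: "i0 < n-k" "v $ i0 \<noteq> 0" using v(1,2) by (metis carrier_vecD eq_vecI index_zero_vec)
  have ynz: "\<exists>i<n. y i \<noteq> 0" using i0 by (intro exI[of _ "i0+k"]) (auto simp: y_def)
  have yeig: "(\<Sum>j\<in>{0..<n}. B $$ (i,j) * y j) = \<mu> * y i" if i: "i < n" for i
  proof -
    have split: "{0..<n} = {0..<k} \<union> {k..<n}" using kn by auto
    have "(\<Sum>j\<in>{0..<n}. B $$ (i,j) * y j) = (\<Sum>j\<in>{k..<n}. B $$ (i,j) * y j)"
      unfolding split by (subst sum.union_disjoint) (auto simp: y_def)
    also have "\<dots> = (\<Sum>l\<in>{0..<n-k}. B $$ (i,l+k) * v $ l)"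
      by (rule sum.reindex_bij_witness[of _ "\<lambda>l. l + k" "\<lambda>j. j - k"]) (auto simp: y_def)
    also have "\<dots> = \<mu> * y i"
    proof (cases "i < k")
      case True
      have "B $$ (i,l+k) = 0" if "l < n-k" for l
        using herm_entry[OF B i, of "l+k"] diag that i True by auto
      then show ?thesis using True by (simp add: y_def)
    next
      case False
      define i' where "i' = i - k"
      have i': "i' < n-k" "i = i' + k" using False i unfolding i'_def by auto
      have "(C *\<^sub>v v) $ i' = (\<Sum>l\<in>{0..<n-k}. C $$ (i',l) * v $ l)"
        using Cc v(1) i' by (simp add: scalar_prod_def)
      also have "\<dots> = (\<Sum>l\<in>{0..<n-k}. B $$ (i,l+k) * v $ l)"
        using i' by (intro sum.cong) (auto simp: C_def)
      finally have "(\<Sum>l\<in>{0..<n-k}. B $$ (i,l+k) * v $ l) = \<mu> * v $ i'"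
        using v(3) v(1) i' by simp
      then show ?thesis using False by (simp add: y_def i'_def)
    qed
    finally show ?thesis .
  qed
  obtain V \<alpha> where V: "unitary n V" and Vj: "\<forall>i<n. \<forall>j<k. V $$ (i,j) = (if i = j then 1 else 0)"
    and Vk: "\<forall>i<n. V $$ (i,k) = \<alpha> * y i"
    using householder[OF kn y0 ynz] by blast
  have Vc: "V \<in> carrier_mat n n" using V unitary_def by auto
  have VV: "cadj V * V = 1\<^sub>m n" using V unitary_def by auto
  define d where "d j = (if j < k then B $$ (j,j) else \<mu>)" for j
  have BV: "(B * V) $$ (p,j) = d j * V $$ (p,j)" if p: "p < n" and j: "j < Suc k" for p j
  proof -
    have jn: "j < n" using j kn by auto
    have "(B * V) $$ (p,j) = (\<Sum>q\<in>{0..<n}. B $$ (p,q) * V $$ (q,j))"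
      by (rule mult_entry[OF Bc Vc p jn])
    also have "\<dots> = d j * V $$ (p,j)"
    proof (cases "j < k")
      case True
      have "(\<Sum>q\<in>{0..<n}. B $$ (p,q) * V $$ (q,j)) = (\<Sum>q\<in>{0..<n}. B $$ (p,q) * (if q = j then 1 else 0))"
        using Vj True by (intro sum.cong) auto
      also have "\<dots> = B $$ (p,j)" using sd2[OF jn, of "\<lambda>q. B $$ (p,q)"] by (simp add: mult.commute)
      also have "\<dots> = d j * V $$ (p,j)"
        using True diag p Vj by (cases "p = j") (auto simp: d_def)
      finally show ?thesis .
    next
      case False
      then have jk: "j = k" using j by auto
      have "(\<Sum>q\<in>{0..<n}. B $$ (p,q) * V $$ (q,j)) = \<alpha> * (\<Sum>q\<in>{0..<n}. B $$ (p,q) * y q)"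
        using Vk jk by (simp add: sum_distrib_left mult.left_commute)
      also have "\<dots> = d j * V $$ (p,j)" using yeig[OF p] Vk p jk by (simp add: d_def)
      finally show ?thesis .
    qed
    finally show ?thesis .
  qed
  have "(cadj V * B * V) $$ (i,j) = 0" if i: "i < n" and j: "j < Suc k" and ij: "i \<noteq> j" for i j
  proof -
    have jn: "j < n" using j kn by auto
    have cV: "cadj V \<in> carrier_mat n n" using Vc by simp
    have "cadj V * B * V = cadj V * (B * V)" using assoc_mult_mat[OF cV Bc Vc] .
    then have "(cadj V * B * V) $$ (i,j) = (\<Sum>p\<in>{0..<n}. cadj V $$ (i,p) * (B * V) $$ (p,j))"
      using mult_entry[OF cV mult_carrier_mat[OF Bc Vc] i jn] by simp
    also have "\<dots> = d j * (\<Sum>p\<in>{0..<n}. cadj V $$ (i,p) * V $$ (p,j))"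
      using BV j by (simp add: sum_distrib_left mult.left_commute)
    also have "(\<Sum>p\<in>{0..<n}. cadj V $$ (i,p) * V $$ (p,j)) = (cadj V * V) $$ (i,j)"
      using mult_entry[OF cV Vc i jn] by simp
    also have "\<dots> = 0" using VV i jn ij by simp
    finally show ?thesis by simp
  qed
  then show ?thesis using V by blast
qed

lemma spectral_k:
  assumes A: "hermitian_mat n A" and kn: "k \<le> n"
  shows "\<exists>U. unitary n U \<and> (\<forall>i<n. \<forall>j<k. i \<noteq> j \<longrightarrow> (cadj U * A * U) $$ (i,j) = 0)"
  using kn
proof (induction k)
  case 0
  have "unitary n (1\<^sub>m n)" unfolding unitary_def by simp
  then show ?case by blast
next
  case (Suc k)
  then obtain U where U: "unitary n U" and D: "\<forall>i<n. \<forall>j<k. i \<noteq> j \<longrightarrow> (cadj U * A * U) $$ (i,j) = 0"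
    by auto
  have H: "hermitian_mat n (cadj U * A * U)" by (rule unitary_conj_herm[OF U A])
  obtain V where V: "unitary n V" and DV: "\<forall>i<n. \<forall>j<Suc k. i \<noteq> j \<longrightarrow> (cadj V * (cadj U * A * U) * V) $$ (i,j) = 0"
    using spectral_step[OF H _ D] Suc.prems by auto
  have Uc: "U \<in> carrier_mat n n" and Vc: "V \<in> carrier_mat n n" using U V unitary_def by auto
  have Ac: "A \<in> carrier_mat n n" using A hermitian_mat_def by auto
  have cU: "cadj U \<in> carrier_mat n n" and cV: "cadj V \<in> carrier_mat n n" using Uc Vc by auto
  have "cadj (U * V) * A * (U * V) = cadj V * cadj U * A * (U * V)" using cadj_mult[OF Uc Vc] by simp
  also have "\<dots> = cadj V * (cadj U * A * U) * V"
  proof -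
    have e1: "cadj V * cadj U * A = cadj V * (cadj U * A)"
      using assoc_mult_mat[OF cV cU Ac] .
    have e2: "cadj V * (cadj U * A) * (U * V) = cadj V * (cadj U * A) * U * V"
      using assoc_mult_mat[OF mult_carrier_mat[OF cV mult_carrier_mat[OF cU Ac]] Uc Vc] by simp
    have e3: "cadj V * (cadj U * A) * U = cadj V * (cadj U * A * U)"
      using assoc_mult_mat[OF cV mult_carrier_mat[OF cU Ac] Uc] .
    show ?thesis using e1 e2 e3 by simp
  qed
  finally have "cadj (U * V) * A * (U * V) = cadj V * (cadj U * A * U) * V" .
  then show ?case using unitary_mult[OF U V] DV by metis
qed

theorem spectral:
  assumes A: "hermitian_mat n A"
  shows "\<exists>U. unitary n U \<and> (\<forall>i<n. \<forall>j<n. i \<noteq> j \<longrightarrow> (cadj U * A * U) $$ (i,j) = 0)"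
  using spectral_k[OF A order_refl] .


definition ipn :: "nat \<Rightarrow> complex vec \<Rightarrow> complex vec \<Rightarrow> complex" where
  "ipn n x y = (\<Sum>i<n. cnj (x $ i) * y $ i)"

lemma ip_adj:
  assumes A: "A \<in> carrier_mat r c" and x: "x \<in> carrier_vec r" and y: "y \<in> carrier_vec c"
  shows "ipn r x (A *\<^sub>v y) = ipn c (cadj A *\<^sub>v x) y"
proof -
  have "ipn r x (A *\<^sub>v y) = (\<Sum>i<r. \<Sum>j<c. cnj (x $ i) * A $$ (i,j) * y $ j)"
    unfolding ipn_def using A x y
    by (intro sum.cong refl) (auto simp: scalar_prod_def sum_distrib_left mult.assoc atLeast0LessThan)
  also have "\<dots> = (\<Sum>j<c. \<Sum>i<r. cnj (x $ i) * A $$ (i,j) * y $ j)" by (rule sum.swap)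
  also have "\<dots> = ipn c (cadj A *\<^sub>v x) y"
    unfolding ipn_def using A x y
    by (intro sum.cong refl) (auto simp: scalar_prod_def sum_distrib_right sum_distrib_left cnj_sum mult.commute mult.left_commute atLeast0LessThan)
  finally show ?thesis .
qed

lemma ipn_self: "ipn n x x = complex_of_real (\<Sum>i<n. (cmod (x $ i))\<^sup>2)"
  unfolding ipn_def by (simp add: cnj_mult_self)

lemma ipn_self_pos:
  fixes x :: "complex vec"
  assumes x: "x \<in> carrier_vec n" "x \<noteq> 0\<^sub>v n"
  shows "(\<Sum>i<n. (cmod (x $ i))\<^sup>2) > 0"
proof -
  obtain i where i: "i < n" "x $ i \<noteq> 0" using x by (metis carrier_vecD eq_vecI index_zero_vec)
  have "(cmod (x $ i))\<^sup>2 \<le> (\<Sum>i<n. (cmod (x $ i))\<^sup>2)" by (rule member_le_sum) (use i in auto)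
  moreover have "(cmod (x $ i))\<^sup>2 > 0" using i by simp
  ultimately show ?thesis by linarith
qed

lemma unitary_col_ip:
  assumes U: "unitary n U" and i: "i < n" and j: "j < n"
  shows "ipn n (col U i) (col U j) = (if i = j then 1 else 0)"
proof -
  have Uc: "U \<in> carrier_mat n n" and UU: "cadj U * U = 1\<^sub>m n" using U unitary_def by auto
  have "(cadj U * U) $$ (i,j) = (\<Sum>l\<in>{0..<n}. cadj U $$ (i,l) * U $$ (l,j))"
    using mult_entry[of "cadj U" n n U n i j] Uc i j by simp
  also have "\<dots> = ipn n (col U i) (col U j)" unfolding ipn_def using Uc i j
    by (auto simp: atLeast0LessThan intro!: sum.cong)
  finally show ?thesis using UU i j by simp
qed

lemma unitary_vec_back:
  assumes U: "unitary n U" and v: "v \<in> carrier_vec n"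
  shows "U *\<^sub>v (cadj U *\<^sub>v v) = v"
proof -
  have Uc: "U \<in> carrier_mat n n" using U unitary_def by auto
  have "U *\<^sub>v (cadj U *\<^sub>v v) = (U * cadj U) *\<^sub>v v"
    using assoc_mult_mat_vec[of U n n "cadj U" n v] Uc v by simp
  also have "\<dots> = v" using unitary_right[OF U] v by simp
  finally show ?thesis .
qed

lemma diag_entry_ip:
  assumes U: "U \<in> carrier_mat n n" and A: "A \<in> carrier_mat n n" and j: "j < n"
  shows "(cadj U * A * U) $$ (j,j) = ipn n (col U j) (A *\<^sub>v col U j)"
proof -
  have cU: "cadj U \<in> carrier_mat n n" using U by simp
  have "cadj U * A * U = cadj U * (A * U)" using assoc_mult_mat[OF cU A U] .
  then have "(cadj U * A * U) $$ (j,j) = (\<Sum>p\<in>{0..<n}. cadj U $$ (j,p) * (A * U) $$ (p,j))"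
    using mult_entry[OF cU mult_carrier_mat[OF A U] j j] by simp
  also have "\<dots> = ipn n (col U j) (A *\<^sub>v col U j)"
    unfolding ipn_def using U A j by (auto simp: atLeast0LessThan intro!: sum.cong)
  finally show ?thesis .
qed

lemma unitary_reconstruct:
  assumes U: "unitary n U" and A: "A \<in> carrier_mat n n"
  shows "U * (cadj U * A * U) * cadj U = A"
proof -
  have Uc: "U \<in> carrier_mat n n" using U unitary_def by auto
  have cU: "cadj U \<in> carrier_mat n n" using Uc by simp
  have UU: "U * cadj U = 1\<^sub>m n" using unitary_right[OF U] .
  have "U * (cadj U * A * U) = U * (cadj U * (A * U))" using assoc_mult_mat[OF cU A Uc] by simp
  also have "\<dots> = (U * cadj U) * (A * U)" using assoc_mult_mat[OF Uc cU mult_carrier_mat[OF A Uc]] by simp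
  also have "\<dots> = A * U" using UU A Uc by simp
  finally have "U * (cadj U * A * U) * cadj U = A * U * cadj U" by simp
  also have "\<dots> = A * (U * cadj U)" using assoc_mult_mat[OF A Uc cU] .
  also have "\<dots> = A" using UU A by simp
  finally show ?thesis .
qed

definition dg :: "nat \<Rightarrow> (nat \<Rightarrow> complex) \<Rightarrow> complex mat" where
  "dg n f = mat n n (\<lambda>(i,j). if i = j then f i else 0)"

lemma dg_carrier[simp]: "dg n f \<in> carrier_mat n n"
  unfolding dg_def by simp

lemma dg_index[simp]: "i < n \<Longrightarrow> j < n \<Longrightarrow> dg n f $$ (i,j) = (if i = j then f i else 0)"
  unfolding dg_def by simp

lemma dg_dims[simp]: "dim_row (dg n f) = n" "dim_col (dg n f) = n"
  unfolding dg_def by simp_all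

lemma dg_mult: "dg n f * dg n g = dg n (\<lambda>i. f i * g i)"
proof (rule eq_matI)
  fix i j assume "i < dim_row (dg n (\<lambda>i. f i * g i))" "j < dim_col (dg n (\<lambda>i. f i * g i))"
  then have i: "i < n" and j: "j < n" by auto
  have "(dg n f * dg n g) $$ (i,j) = (\<Sum>l\<in>{0..<n}. dg n f $$ (i,l) * dg n g $$ (l,j))"
    by (rule mult_entry[OF dg_carrier dg_carrier i j])
  also have "\<dots> = (\<Sum>l\<in>{0..<n}. (if i = l then 1 else 0) * (f l * dg n g $$ (l,j)))"
    by (intro sum.cong) (auto simp: i)
  also have "\<dots> = f i * dg n g $$ (i,j)" by (rule sd1[OF i])
  finally show "(dg n f * dg n g) $$ (i,j) = dg n (\<lambda>i. f i * g i) $$ (i,j)" using i j by simp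
qed simp_all

lemma dg_mult_vec: "x \<in> carrier_vec n \<Longrightarrow> i < n \<Longrightarrow> (dg n f *\<^sub>v x) $ i = f i * x $ i"
proof -
  assume x: "x \<in> carrier_vec n" and i: "i < n"
  have "(dg n f *\<^sub>v x) $ i = (\<Sum>l\<in>{0..<n}. dg n f $$ (i,l) * x $ l)"
    using x i by (simp add: scalar_prod_def)
  also have "\<dots> = (\<Sum>l\<in>{0..<n}. (if i = l then 1 else 0) * (f l * x $ l))"
    by (intro sum.cong) (auto simp: i)
  also have "\<dots> = f i * x $ i" by (rule sd1[OF i])
  finally show ?thesis .
qed

lemma cadj_dg: "cadj (dg n f) = dg n (\<lambda>i. cnj (f i))"
  by (rule eq_matI) auto

lemma diag_is_dg:
  assumes D: "D \<in> carrier_mat n n" and off: "\<forall>i<n. \<forall>j<n. i \<noteq> j \<longrightarrow> D $$ (i,j) = 0"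
  shows "D = dg n (\<lambda>i. D $$ (i,i))"
  by (rule eq_matI) (use D off in auto)

lemma hpd_herm: "hpd_mat n A \<Longrightarrow> hermitian_mat n A"
  unfolding hpd_mat_def by simp

lemma hpd_form:
  assumes "hpd_mat n A" "v \<in> carrier_vec n" "v \<noteq> 0\<^sub>v n"
  shows "Im (ipn n v (A *\<^sub>v v)) = 0 \<and> Re (ipn n v (A *\<^sub>v v)) > 0"
  using assms unfolding hpd_mat_def ipn_def Let_def by blast

lemma unitary_col_nz:
  assumes U: "unitary n U" and j: "j < n"
  shows "col U j \<in> carrier_vec n" "col U j \<noteq> 0\<^sub>v n"
proof -
  have Uc: "U \<in> carrier_mat n n" using U unitary_def by auto
  show "col U j \<in> carrier_vec n" using Uc j by simp
  have "ipn n (col U j) (col U j) = 1" using unitary_col_ip[OF U j j] by simp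
  moreover have "ipn n (0\<^sub>v n) (0\<^sub>v n) = 0" unfolding ipn_def by simp
  ultimately show "col U j \<noteq> 0\<^sub>v n" by auto
qed

lemma hpd_sqrt_exists:
  assumes A: "hpd_mat n A"
  shows "\<exists>S. hpd_mat n S \<and> S * S = A"
proof -
  have H: "hermitian_mat n A" using hpd_herm[OF A] .
  have Ac: "A \<in> carrier_mat n n" using H hermitian_mat_def by auto
  obtain U where U: "unitary n U" and off: "\<forall>i<n. \<forall>j<n. i \<noteq> j \<longrightarrow> (cadj U * A * U) $$ (i,j) = 0"
    using spectral[OF H] by blast
  have Uc: "U \<in> carrier_mat n n" using U unitary_def by auto
  have cU: "cadj U \<in> carrier_mat n n" using Uc by simp
  define D where "D = cadj U * A * U"
  have Dc: "D \<in> carrier_mat n n" unfolding D_def using mult_carrier_mat[OF mult_carrier_mat[OF cU Ac] Uc] .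
  define d where "d i = D $$ (i,i)" for i
  have Ddg: "D = dg n d" unfolding d_def by (rule diag_is_dg[OF Dc]) (use off D_def in auto)
  have dpos: "Im (d j) = 0 \<and> Re (d j) > 0" if j: "j < n" for j
  proof -
    have "d j = ipn n (col U j) (A *\<^sub>v col U j)"
      unfolding d_def D_def by (rule diag_entry_ip[OF Uc Ac j])
    then show ?thesis using hpd_form[OF A unitary_col_nz[OF U j]] by simp
  qed
  define \<sigma> where "\<sigma> i = sqrt (Re (d i))" for i
  define Sg where "Sg = dg n (\<lambda>i. complex_of_real (\<sigma> i))"
  have Sgc: "Sg \<in> carrier_mat n n" unfolding Sg_def by simp
  have SgSg: "Sg * Sg = D"
  proof -
    have "Sg * Sg = dg n (\<lambda>i. complex_of_real (\<sigma> i) * complex_of_real (\<sigma> i))"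
      unfolding Sg_def dg_mult ..
    also have "\<dots> = dg n d"
    proof (rule eq_matI)
      fix i j assume "i < dim_row (dg n d)" "j < dim_col (dg n d)"
      then have i: "i < n" and j: "j < n" by auto
      have sq: "complex_of_real (\<sigma> k) * complex_of_real (\<sigma> k) = d k" if k: "k < n" for k
        using dpos[OF k] unfolding \<sigma>_def
        by (simp flip: of_real_mult) (simp add: complex_eq_iff)
      then show "dg n (\<lambda>i. complex_of_real (\<sigma> i) * complex_of_real (\<sigma> i)) $$ (i,j) = dg n d $$ (i,j)"
        using i j by simp
    qed simp_all
    finally show ?thesis using Ddg by simp
  qed
  have cSg: "cadj Sg = Sg" unfolding Sg_def cadj_dg by simp
  define S where "S = U * Sg * cadj U"
  have Sc: "S \<in> carrier_mat n n" unfolding S_def using mult_carrier_mat[OF mult_carrier_mat[OF Uc Sgc] cU] .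
  have USg: "U * Sg \<in> carrier_mat n n" using Uc Sgc by simp
  have SH: "cadj S = S"
  proof -
    have "cadj S = cadj (cadj U) * cadj (U * Sg)" unfolding S_def using cadj_mult[OF USg cU] .
    also have "cadj (U * Sg) = cadj Sg * cadj U" using cadj_mult[OF Uc Sgc] .
    finally have "cadj S = U * (Sg * cadj U)" using cSg by simp
    also have "\<dots> = S" unfolding S_def using assoc_mult_mat[OF Uc Sgc cU] by simp
    finally show ?thesis .
  qed
  have SS: "S * S = A"
  proof -
    have "S * S = (U * Sg) * (cadj U * (U * Sg * cadj U))"
      unfolding S_def using assoc_mult_mat[OF USg cU mult_carrier_mat[OF USg cU]] .
    also have "cadj U * (U * Sg * cadj U) = (cadj U * (U * Sg)) * cadj U"
      using assoc_mult_mat[OF cU USg cU] by simp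
    also have "cadj U * (U * Sg) = (cadj U * U) * Sg" using assoc_mult_mat[OF cU Uc Sgc] by simp
    also have "cadj U * U = 1\<^sub>m n" using U unitary_def by auto
    also have "1\<^sub>m n * Sg = Sg" using Sgc by simp
    also have "(U * Sg) * (Sg * cadj U) = U * (Sg * Sg) * cadj U"
    proof -
      have "(U * Sg) * (Sg * cadj U) = U * (Sg * (Sg * cadj U))" using assoc_mult_mat[OF Uc Sgc mult_carrier_mat[OF Sgc cU]] .
      also have "Sg * (Sg * cadj U) = (Sg * Sg) * cadj U" using assoc_mult_mat[OF Sgc Sgc cU] by simp
      also have "U * ((Sg * Sg) * cadj U) = U * (Sg * Sg) * cadj U"
        using assoc_mult_mat[OF Uc mult_carrier_mat[OF Sgc Sgc] cU] by simp
      finally show ?thesis .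
    qed
    also have "\<dots> = A" using SgSg unitary_reconstruct[OF U Ac] unfolding D_def by simp
    finally show ?thesis .
  qed
  have SPD: "Im (ipn n v (S *\<^sub>v v)) = 0 \<and> Re (ipn n v (S *\<^sub>v v)) > 0"
    if v: "v \<in> carrier_vec n" "v \<noteq> 0\<^sub>v n" for v
  proof -
    define x where "x = cadj U *\<^sub>v v"
    have xc: "x \<in> carrier_vec n" unfolding x_def using cU v(1) by simp
    have xnz: "x \<noteq> 0\<^sub>v n"
    proof
      assume "x = 0\<^sub>v n"
      then have "U *\<^sub>v x = 0\<^sub>v n" using Uc by (intro eq_vecI) auto
      then show False using unitary_vec_back[OF U v(1)] v(2) unfolding x_def by simp
    qed
    have "S *\<^sub>v v = (U * Sg) *\<^sub>v x"
      unfolding S_def x_def using assoc_mult_mat_vec[OF USg cU v(1)] .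
    also have "\<dots> = U *\<^sub>v (Sg *\<^sub>v x)" using assoc_mult_mat_vec[OF Uc Sgc xc] .
    finally have "ipn n v (S *\<^sub>v v) = ipn n v (U *\<^sub>v (Sg *\<^sub>v x))" by simp
    also have "\<dots> = ipn n x (Sg *\<^sub>v x)"
      using ip_adj[OF Uc v(1) mult_mat_vec_carrier[OF Sgc xc]] unfolding x_def by simp
    also have "\<dots> = (\<Sum>i<n. cnj (x $ i) * (complex_of_real (\<sigma> i) * x $ i))"
      unfolding ipn_def Sg_def using dg_mult_vec[OF xc] by simp
    also have "\<dots> = complex_of_real (\<Sum>i<n. \<sigma> i * (cmod (x $ i))\<^sup>2)"
      by (simp add: cnj_mult_self mult.left_commute)
    finally have eq: "ipn n v (S *\<^sub>v v) = complex_of_real (\<Sum>i<n. \<sigma> i * (cmod (x $ i))\<^sup>2)" .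
    obtain i where i: "i < n" "x $ i \<noteq> 0" using xc xnz by (metis carrier_vecD eq_vecI index_zero_vec)
    have sp: "\<sigma> j > 0" if "j < n" for j unfolding \<sigma>_def using dpos[OF that] by simp
    have sp': "0 \<le> \<sigma> j * (cmod (x $ j))\<^sup>2" if "j < n" for j using sp[OF that] by simp
    have "\<sigma> i * (cmod (x $ i))\<^sup>2 \<le> (\<Sum>i<n. \<sigma> i * (cmod (x $ i))\<^sup>2)"
      by (rule member_le_sum) (use i sp' in auto)
    moreover have "\<sigma> i * (cmod (x $ i))\<^sup>2 > 0" using i sp by simp
    ultimately show ?thesis unfolding eq by simp
  qed
  have "hpd_mat n S"
    unfolding hpd_mat_def hermitian_mat_def Let_def using Sc SH SPD unfolding ipn_def by blast
  then show ?thesis using SS by blast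
qed

lemma ipn_cnj: "ipn n x y = cnj (ipn n y x)"
  unfolding ipn_def by (simp add: mult.commute)

lemma cadj_minus:
  assumes "A \<in> carrier_mat r c" "B \<in> carrier_mat r c"
  shows "cadj (A - B) = cadj A - cadj B"
proof (rule eq_matI)
  fix i j assume "i < dim_row (cadj A - cadj B)" "j < dim_col (cadj A - cadj B)"
  then have i: "i < c" and j: "j < r" using assms by auto
  show "cadj (A - B) $$ (i,j) = (cadj A - cadj B) $$ (i,j)" using assms i j by simp
qed (use assms in simp_all)

lemma sq_shift:
  assumes Sc: "S \<in> carrier_mat n n" and Tc: "T \<in> carrier_mat n n"
    and SH: "cadj S = S" and TH: "cadj T = T" and ST: "S * S = T * T"
    and u: "u \<in> carrier_vec n"
    and shift: "\<forall>p<n. (S *\<^sub>v u) $ p = (T *\<^sub>v u) $ p + \<mu> * u $ p" and mu: "Im \<mu> = 0"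
  shows "2 * Re \<mu> * Re (ipn n u (T *\<^sub>v u)) + (Re \<mu>)\<^sup>2 * (\<Sum>i<n. (cmod (u $ i))\<^sup>2) = 0"
proof -
  define a where "a = T *\<^sub>v u"
  have ac: "a \<in> carrier_vec n" unfolding a_def using Tc u by simp
  have Suc: "S *\<^sub>v u \<in> carrier_vec n" using Sc u by simp
  have "ipn n (S *\<^sub>v u) (S *\<^sub>v u) = ipn n u (S *\<^sub>v (S *\<^sub>v u))"
    using ip_adj[OF Sc u Suc] SH by simp
  also have "S *\<^sub>v (S *\<^sub>v u) = (S * S) *\<^sub>v u" using assoc_mult_mat_vec[OF Sc Sc u] by simp
  also have "\<dots> = T *\<^sub>v (T *\<^sub>v u)" using ST assoc_mult_mat_vec[OF Tc Tc u] by simp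
  also have "ipn n u (T *\<^sub>v (T *\<^sub>v u)) = ipn n a a"
    using ip_adj[OF Tc u ac] TH unfolding a_def by simp
  finally have e1: "ipn n (S *\<^sub>v u) (S *\<^sub>v u) = ipn n a a" .
  have "ipn n (S *\<^sub>v u) (S *\<^sub>v u) = (\<Sum>i<n. cnj (a $ i + \<mu> * u $ i) * (a $ i + \<mu> * u $ i))"
    unfolding ipn_def a_def using shift by (intro sum.cong) auto
  also have "\<dots> = (\<Sum>i<n. cnj (a $ i) * a $ i + \<mu> * (cnj (a $ i) * u $ i) + cnj \<mu> * (cnj (u $ i) * a $ i)
      + \<mu> * cnj \<mu> * (cnj (u $ i) * u $ i))"
    by (intro sum.cong) (auto simp: algebra_simps)
  also have "\<dots> = ipn n a a + \<mu> * ipn n a u + cnj \<mu> * ipn n u a + \<mu> * cnj \<mu> * ipn n u u"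
    unfolding ipn_def by (simp add: sum.distrib sum_distrib_left)
  finally have e2: "ipn n a a + \<mu> * ipn n a u + cnj \<mu> * ipn n u a + \<mu> * cnj \<mu> * ipn n u u = ipn n a a"
    using e1 by simp
  define r where "r = Re \<mu>"
  have mur: "\<mu> = complex_of_real r" using mu unfolding r_def by (simp add: complex_eq_iff)
  define z where "z = ipn n u a"
  have "ipn n a u = cnj z" unfolding z_def by (rule ipn_cnj)
  then have "complex_of_real r * cnj z + complex_of_real r * z
      + complex_of_real r * complex_of_real r * complex_of_real (\<Sum>i<n. (cmod (u $ i))\<^sup>2) = 0"
    using e2 unfolding mur z_def ipn_self by (simp add: add.assoc)
  then have "Re (complex_of_real r * cnj z + complex_of_real r * z
      + complex_of_real r * complex_of_real r * complex_of_real (\<Sum>i<n. (cmod (u $ i))\<^sup>2)) = 0"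
    by simp
  then have "2 * r * Re z + r\<^sup>2 * (\<Sum>i<n. (cmod (u $ i))\<^sup>2) = 0"
    by (simp add: power2_eq_square algebra_simps)
  then show ?thesis unfolding r_def z_def a_def .
qed

lemma hpd_sqrt_unique:
  assumes S: "hpd_mat n S" and T: "hpd_mat n T" and ST: "S * S = T * T"
  shows "S = T"
proof -
  have Sc: "S \<in> carrier_mat n n" and SH: "cadj S = S"
    using S unfolding hpd_mat_def hermitian_mat_def by auto
  have Tc: "T \<in> carrier_mat n n" and TH: "cadj T = T"
    using T unfolding hpd_mat_def hermitian_mat_def by auto
  define D where "D = S - T"
  have Dc: "D \<in> carrier_mat n n" unfolding D_def using minus_carrier_mat[OF Tc] .
  have DH: "hermitian_mat n D" unfolding hermitian_mat_def D_def
    using Dc cadj_minus[OF Sc Tc] SH TH D_def by simp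
  obtain U where U: "unitary n U" and off: "\<forall>i<n. \<forall>j<n. i \<noteq> j \<longrightarrow> (cadj U * D * U) $$ (i,j) = 0"
    using spectral[OF DH] by blast
  have Uc: "U \<in> carrier_mat n n" using U unitary_def by auto
  have cU: "cadj U \<in> carrier_mat n n" using Uc by simp
  define M where "M = cadj U * D * U"
  have Mc: "M \<in> carrier_mat n n" unfolding M_def using mult_carrier_mat[OF mult_carrier_mat[OF cU Dc] Uc] .
  have UM: "U * M = D * U"
  proof -
    have "U * M = U * (cadj U * (D * U))" unfolding M_def using assoc_mult_mat[OF cU Dc Uc] by simp
    also have "\<dots> = (U * cadj U) * (D * U)" using assoc_mult_mat[OF Uc cU mult_carrier_mat[OF Dc Uc]] by simp
    also have "\<dots> = D * U" using unitary_right[OF U] Dc Uc by simp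
    finally show ?thesis .
  qed
  have Mjj: "M $$ (j,j) = 0" if j: "j < n" for j
  proof -
    define \<mu> where "\<mu> = M $$ (j,j)"
    define u where "u = col U j"
    have uc: "u \<in> carrier_vec n" and unz: "u \<noteq> 0\<^sub>v n" using unitary_col_nz[OF U j] u_def by auto
    have Du: "(D *\<^sub>v u) $ p = \<mu> * u $ p" if p: "p < n" for p
    proof -
      have "(D *\<^sub>v u) $ p = (D * U) $$ (p,j)" unfolding u_def using Dc Uc p j by simp
      also have "\<dots> = (U * M) $$ (p,j)" using UM by simp
      also have "\<dots> = (\<Sum>l\<in>{0..<n}. U $$ (p,l) * M $$ (l,j))" by (rule mult_entry[OF Uc Mc p j])
      also have "\<dots> = (\<Sum>l\<in>{0..<n}. (if l = j then 1 else 0) * (U $$ (p,l) * M $$ (l,j)))"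
        using off j unfolding M_def by (intro sum.cong) auto
      also have "\<dots> = U $$ (p,j) * M $$ (j,j)" by (rule sd2[OF j])
      finally show ?thesis unfolding u_def \<mu>_def using p j Uc by simp
    qed
    have shift: "\<forall>p<n. (S *\<^sub>v u) $ p = (T *\<^sub>v u) $ p + \<mu> * u $ p"
    proof (intro allI impI)
      fix p assume p: "p < n"
      have "(D *\<^sub>v u) $ p = (S *\<^sub>v u) $ p - (T *\<^sub>v u) $ p"
        unfolding D_def using Sc Tc uc p by (simp add: scalar_prod_def sum_subtractf left_diff_distrib)
      then show "(S *\<^sub>v u) $ p = (T *\<^sub>v u) $ p + \<mu> * u $ p" using Du[OF p] by simp
    qed
    have shift': "\<forall>p<n. (T *\<^sub>v u) $ p = (S *\<^sub>v u) $ p + (- \<mu>) * u $ p" using shift by simp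
    have "\<mu> = ipn n u (D *\<^sub>v u)" unfolding \<mu>_def M_def u_def by (rule diag_entry_ip[OF Uc Dc j])
    also have "\<dots> = ipn n (D *\<^sub>v u) u" using ip_adj[OF Dc uc uc] DH unfolding hermitian_mat_def by simp
    also have "\<dots> = cnj (ipn n u (D *\<^sub>v u))" by (rule ipn_cnj)
    finally have "\<mu> = cnj \<mu>" using \<open>\<mu> = ipn n u (D *\<^sub>v u)\<close> by simp
    then have mu: "Im \<mu> = 0" by (simp add: complex_eq_iff)
    have e1: "2 * Re \<mu> * Re (ipn n u (T *\<^sub>v u)) + (Re \<mu>)\<^sup>2 * (\<Sum>i<n. (cmod (u $ i))\<^sup>2) = 0"
      by (rule sq_shift[OF Sc Tc SH TH ST uc shift mu])
    have e2: "2 * Re (- \<mu>) * Re (ipn n u (S *\<^sub>v u)) + (Re (- \<mu>))\<^sup>2 * (\<Sum>i<n. (cmod (u $ i))\<^sup>2) = 0"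
      by (rule sq_shift[OF Tc Sc TH SH ST[symmetric] uc shift']) (use mu in simp)
    have t: "Re (ipn n u (T *\<^sub>v u)) > 0" using hpd_form[OF T uc unz] by simp
    have s: "Re (ipn n u (S *\<^sub>v u)) > 0" using hpd_form[OF S uc unz] by simp
    define N where "N = (\<Sum>i<n. (cmod (u $ i))\<^sup>2)"
    define m where "m = Re \<mu>"
    have e1': "2 * m * Re (ipn n u (T *\<^sub>v u)) + m\<^sup>2 * N = 0" using e1 unfolding m_def N_def .
    have e2': "- 2 * m * Re (ipn n u (S *\<^sub>v u)) + m\<^sup>2 * N = 0" using e2 unfolding m_def N_def by simp
    have "2 * m * (Re (ipn n u (T *\<^sub>v u)) + Re (ipn n u (S *\<^sub>v u)))
       = (2 * m * Re (ipn n u (T *\<^sub>v u)) + m\<^sup>2 * N) - (- 2 * m * Re (ipn n u (S *\<^sub>v u)) + m\<^sup>2 * N)"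
      by (simp add: algebra_simps)
    then have "2 * Re \<mu> * (Re (ipn n u (T *\<^sub>v u)) + Re (ipn n u (S *\<^sub>v u))) = 0"
      using e1' e2' unfolding m_def by simp
    then have "Re \<mu> = 0" using t s by simp
    then show ?thesis using mu unfolding \<mu>_def by (simp add: complex_eq_iff)
  qed
  have M0: "M = 0\<^sub>m n n"
  proof (rule eq_matI)
    fix i j assume "i < dim_row (0\<^sub>m n n :: complex mat)" "j < dim_col (0\<^sub>m n n :: complex mat)"
    then have i: "i < n" and j: "j < n" by auto
    show "M $$ (i,j) = 0\<^sub>m n n $$ (i,j)"
      using off i j Mjj[OF i] unfolding M_def by (cases "i = j") auto
  qed (use Mc in simp_all)
  have "D = U * M * cadj U" using unitary_reconstruct[OF U Dc] unfolding M_def by simp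
  also have "\<dots> = 0\<^sub>m n n" unfolding M0 using Uc cU by simp
  finally have "D = 0\<^sub>m n n" .
  then show ?thesis
  proof -
    assume D0: "D = 0\<^sub>m n n"
    show "S = T"
    proof (rule eq_matI)
      fix i j assume "i < dim_row T" "j < dim_col T"
      then have i: "i < n" and j: "j < n" using Tc by auto
      have "D $$ (i,j) = S $$ (i,j) - T $$ (i,j)" unfolding D_def using Sc Tc i j by simp
      then show "S $$ (i,j) = T $$ (i,j)" using D0 i j by simp
    qed (use Sc Tc in auto)
  qed
qed

lemma hpd_sqrt_prop:
  assumes "hpd_mat n A"
  shows "hpd_mat n (hpd_sqrt n A) \<and> hpd_sqrt n A * hpd_sqrt n A = A"
proof -
  have "\<exists>!S. hpd_mat n S \<and> S * S = A"
    using hpd_sqrt_exists[OF assms] hpd_sqrt_unique by metis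
  then show ?thesis unfolding hpd_sqrt_def by (rule theI')
qed

lemma hpd_sqrt_carrier: "hpd_mat n A \<Longrightarrow> hpd_sqrt n A \<in> carrier_mat n n"
  using hpd_sqrt_prop unfolding hpd_mat_def hermitian_mat_def by blast


lemma prod_list_upt: "prod_list (map f [0..<n]) = (\<Prod>j\<in>{0..<n}. (f j :: complex))"
  by (induction n) auto

lemma det_dg: "det (dg n f) = (\<Prod>j\<in>{0..<n}. f j)"
proof -
  have "upper_triangular (dg n f)" unfolding upper_triangular_def by simp
  then have "det (dg n f) = prod_list (diag_mat (dg n f))" using det_upper_triangular dg_carrier by blast
  also have "diag_mat (dg n f) = map f [0..<n]" unfolding diag_mat_def by simp
  finally show ?thesis using prod_list_upt by simp
qed

lemma det_unitary_conj:
  assumes U: "unitary n U" and X: "X \<in> carrier_mat n n"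
  shows "det (U * X * cadj U) = det X"
proof -
  have Uc: "U \<in> carrier_mat n n" using U unitary_def by auto
  have cU: "cadj U \<in> carrier_mat n n" using Uc by simp
  have "det (U * X * cadj U) = det U * det X * det (cadj U)"
    using det_mult[OF mult_carrier_mat[OF Uc X] cU] det_mult[OF Uc X] by simp
  also have "\<dots> = det X * (det (cadj U) * det U)" by simp
  also have "det (cadj U) * det U = 1"
    using det_mult[OF cU Uc] U unfolding unitary_def by simp
  finally show ?thesis by simp
qed

lemma cmod_le_1_of_unit:
  fixes u :: "complex vec"
  assumes "ipn n u u = 1" "p < n"
  shows "cmod (u $ p) \<le> 1"
proof -
  have "complex_of_real (\<Sum>i<n. (cmod (u $ i))\<^sup>2) = 1" using assms(1) ipn_self by metis
  then have "(\<Sum>i<n. (cmod (u $ i))\<^sup>2) = 1" using of_real_eq_1_iff by blast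
  moreover have "(cmod (u $ p))\<^sup>2 \<le> (\<Sum>i<n. (cmod (u $ i))\<^sup>2)"
    by (rule member_le_sum) (use assms in auto)
  ultimately have "(cmod (u $ p))\<^sup>2 \<le> 1" by simp
  then show ?thesis by (simp add: abs_square_le_1)
qed

lemma gram_factor:
  assumes G: "G \<in> carrier_mat m k"
  shows "\<exists>lam::nat \<Rightarrow> real. (\<forall>j. 0 \<le> lam j)
     \<and> (\<forall>s::real. det (1\<^sub>m m + complex_of_real s \<cdot>\<^sub>m (G * cadj G)) = complex_of_real (\<Prod>j\<in>{0..<m}. 1 + s * lam j))
     \<and> (\<forall>j<m. lam j \<le> (\<Sum>p<m. \<Sum>q<m. cmod ((G * cadj G) $$ (p,q))))"
proof -
  define Th where "Th = G * cadj G"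
  have cG: "cadj G \<in> carrier_mat k m" using G by simp
  have Thc: "Th \<in> carrier_mat m m" unfolding Th_def using mult_carrier_mat[OF G cG] .
  have ThH: "hermitian_mat m Th"
    unfolding hermitian_mat_def Th_def using Thc cadj_mult[OF G cG] unfolding Th_def by simp
  obtain U where U: "unitary m U" and off: "\<forall>i<m. \<forall>j<m. i \<noteq> j \<longrightarrow> (cadj U * Th * U) $$ (i,j) = 0"
    using spectral[OF ThH] by blast
  have Uc: "U \<in> carrier_mat m m" using U unitary_def by auto
  have cU: "cadj U \<in> carrier_mat m m" using Uc by simp
  define L where "L = cadj U * Th * U"
  have Lc: "L \<in> carrier_mat m m" unfolding L_def using mult_carrier_mat[OF mult_carrier_mat[OF cU Thc] Uc] .
  define d where "d j = L $$ (j,j)" for j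
  have Ldg: "L = dg m d" unfolding d_def by (rule diag_is_dg[OF Lc]) (use off L_def in auto)
  define lam where "lam j = (if j < m then Re (d j) else 0)" for j
  have dform: "d j = complex_of_real (\<Sum>i<k. (cmod ((cadj G *\<^sub>v col U j) $ i))\<^sup>2)" if j: "j < m" for j
  proof -
    have uc: "col U j \<in> carrier_vec m" using Uc j by simp
    have "d j = ipn m (col U j) (Th *\<^sub>v col U j)" unfolding d_def L_def by (rule diag_entry_ip[OF Uc Thc j])
    also have "Th *\<^sub>v col U j = G *\<^sub>v (cadj G *\<^sub>v col U j)" unfolding Th_def using assoc_mult_mat_vec[OF G cG uc] .
    also have "ipn m (col U j) (G *\<^sub>v (cadj G *\<^sub>v col U j)) = ipn k (cadj G *\<^sub>v col U j) (cadj G *\<^sub>v col U j)"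
      using ip_adj[OF G uc] cG uc by simp
    finally show ?thesis unfolding ipn_self .
  qed
  have "0 \<le> Re (d j)" if "j < m" for j
  proof -
    have "Re (d j) = (\<Sum>i<k. (cmod ((cadj G *\<^sub>v col U j) $ i))\<^sup>2)"
      using dform[OF that] by (metis Re_complex_of_real)
    then show ?thesis by (simp add: sum_nonneg)
  qed
  then have lam_nn: "\<forall>j. 0 \<le> lam j" unfolding lam_def by simp
  have dl: "d j = complex_of_real (lam j)" if "j < m" for j using dform[OF that] that unfolding lam_def by simp
  have detf: "det (1\<^sub>m m + complex_of_real s \<cdot>\<^sub>m Th) = complex_of_real (\<Prod>j\<in>{0..<m}. 1 + s * lam j)" for s :: real
  proof -
    define X where "X = 1\<^sub>m m + complex_of_real s \<cdot>\<^sub>m L"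
    have Xc: "X \<in> carrier_mat m m" unfolding X_def using Lc by simp
    have "U * X * cadj U = (U * 1\<^sub>m m + U * (complex_of_real s \<cdot>\<^sub>m L)) * cadj U"
      unfolding X_def using mult_add_distrib_mat[OF Uc one_carrier_mat smult_carrier_mat[OF Lc]] by simp
    also have "\<dots> = U * 1\<^sub>m m * cadj U + U * (complex_of_real s \<cdot>\<^sub>m L) * cadj U"
      using add_mult_distrib_mat[of "U * 1\<^sub>m m" m m "U * (complex_of_real s \<cdot>\<^sub>m L)" "cadj U" m] Uc Lc cU
      by (simp add: mult_smult_distrib[OF Uc Lc])
    also have "U * 1\<^sub>m m * cadj U = 1\<^sub>m m" using Uc unitary_right[OF U] by simp
    also have "U * (complex_of_real s \<cdot>\<^sub>m L) * cadj U = complex_of_real s \<cdot>\<^sub>m (U * L * cadj U)"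
      using mult_smult_distrib[OF Uc Lc] mult_smult_assoc_mat[OF mult_carrier_mat[OF Uc Lc] cU] by simp
    also have "U * L * cadj U = Th" unfolding L_def by (rule unitary_reconstruct[OF U Thc])
    finally have eq: "U * X * cadj U = 1\<^sub>m m + complex_of_real s \<cdot>\<^sub>m Th" .
    have "X = dg m (\<lambda>j. 1 + complex_of_real s * d j)"
    proof (rule eq_matI)
      fix i j assume "i < dim_row (dg m (\<lambda>j. 1 + complex_of_real s * d j))" "j < dim_col (dg m (\<lambda>j. 1 + complex_of_real s * d j))"
      then have i: "i < m" and j: "j < m" by auto
      show "X $$ (i,j) = dg m (\<lambda>j. 1 + complex_of_real s * d j) $$ (i,j)"
        unfolding X_def Ldg using i j by simp
    qed (use Xc in auto)
    then have "det X = (\<Prod>j\<in>{0..<m}. 1 + complex_of_real s * d j)" using det_dg by simp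
    also have "\<dots> = (\<Prod>j\<in>{0..<m}. complex_of_real (1 + s * lam j))"
      by (intro prod.cong) (auto simp: dl)
    also have "\<dots> = complex_of_real (\<Prod>j\<in>{0..<m}. 1 + s * lam j)" by simp
    finally show ?thesis using eq det_unitary_conj[OF U Xc] by simp
  qed
  have bound: "lam j \<le> (\<Sum>p<m. \<Sum>q<m. cmod (Th $$ (p,q)))" if j: "j < m" for j
  proof -
    define u where "u = col U j"
    have uc: "u \<in> carrier_vec m" unfolding u_def using Uc j by simp
    have u1: "ipn m u u = 1" unfolding u_def using unitary_col_ip[OF U j j] by simp
    have ub: "cmod (u $ p) \<le> 1" if "p < m" for p using cmod_le_1_of_unit[OF u1 that] .
    have "complex_of_real (lam j) = ipn m u (Th *\<^sub>v u)"
      using dl[OF j] diag_entry_ip[OF Uc Thc j] unfolding d_def L_def u_def by simp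
    also have "\<dots> = (\<Sum>p<m. \<Sum>q<m. cnj (u $ p) * (Th $$ (p,q) * u $ q))"
      unfolding ipn_def using Thc uc by (intro sum.cong) (auto simp: scalar_prod_def sum_distrib_left atLeast0LessThan)
    finally have "lam j = cmod (\<Sum>p<m. \<Sum>q<m. cnj (u $ p) * (Th $$ (p,q) * u $ q))"
      using lam_nn by (metis norm_of_real abs_of_nonneg)
    also have "\<dots> \<le> (\<Sum>p<m. cmod (\<Sum>q<m. cnj (u $ p) * (Th $$ (p,q) * u $ q)))" by (rule norm_sum)
    also have "\<dots> \<le> (\<Sum>p<m. \<Sum>q<m. cmod (cnj (u $ p) * (Th $$ (p,q) * u $ q)))"
      by (intro sum_mono norm_sum)
    also have "\<dots> \<le> (\<Sum>p<m. \<Sum>q<m. cmod (Th $$ (p,q)))"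
    proof (intro sum_mono)
      fix p q assume p: "p \<in> {..<m}" and q: "q \<in> {..<m}"
      have "cmod (cnj (u $ p) * (Th $$ (p,q) * u $ q)) = cmod (u $ p) * (cmod (Th $$ (p,q)) * cmod (u $ q))"
        by (simp add: norm_mult)
      also have "\<dots> \<le> 1 * (cmod (Th $$ (p,q)) * 1)"
        using ub p q by (intro mult_mono) (auto intro: mult_left_le)
      finally show "cmod (cnj (u $ p) * (Th $$ (p,q) * u $ q)) \<le> cmod (Th $$ (p,q))" by simp
    qed
    finally show ?thesis .
  qed
  show ?thesis using lam_nn detf bound unfolding Th_def by blast
qed


lemma cgauss_prob: "prob_space cgauss"
proof -
  define f where "f t = exp (- t\<^sup>2) / sqrt pi" for t :: real
  have nd: "normal_density 0 (1 / sqrt 2) t = f t" for t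
    unfolding normal_density_def f_def by (simp add: power_divide real_sqrt_divide)
  have fint: "(\<integral>\<^sup>+t. ennreal (f t) \<partial>lborel) = 1"
  proof -
    have "(\<integral>\<^sup>+t. ennreal (f t) \<partial>lborel) = (\<integral>\<^sup>+t. ennreal (normal_density 0 (1 / sqrt 2) t) \<partial>lborel)"
      using nd by simp
    also have "\<dots> = ennreal (\<integral>t. normal_density 0 (1 / sqrt 2) t \<partial>lborel)"
      by (rule nn_integral_eq_integral) auto
    also have "\<dots> = 1" by simp
    finally show ?thesis .
  qed
  have prod: "(\<Prod>b\<in>Basis. ennreal (f (z \<bullet> b))) = ennreal (exp (- (cmod z * cmod z)) / pi)" for z :: complex
  proof -
    have "(\<Prod>b\<in>Basis. ennreal (f (z \<bullet> b))) = ennreal (f (Re z)) * ennreal (f (Im z))"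
      by (simp add: Basis_complex_def inner_complex_def)
    also have "\<dots> = ennreal (f (Re z) * f (Im z))"
      by (rule ennreal_mult''[symmetric]) (simp add: f_def)
    also have "f (Re z) * f (Im z) = exp (- (cmod z * cmod z)) / pi"
      unfolding f_def by (simp add: cmod_def exp_add[symmetric] power2_eq_square algebra_simps)
    finally show ?thesis .
  qed
  have "emeasure cgauss (space cgauss) = (\<integral>\<^sup>+z. ennreal (exp (- (cmod z * cmod z)) / pi) \<partial>lborel)"
    unfolding cgauss_def by (simp add: emeasure_density)
  also have "\<dots> = (\<integral>\<^sup>+z. (\<Prod>b\<in>Basis. ennreal (f (z \<bullet> b))) \<partial>(lborel :: complex measure))"
    using prod by simp
  also have "\<dots> = (\<Prod>b\<in>(Basis :: complex set). \<integral>\<^sup>+t. ennreal (f t) \<partial>lborel)"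
    by (rule nn_integral_lborel_prod) (auto simp: f_def)
  also have "\<dots> = 1" using fint by simp
  finally show ?thesis by (rule prob_spaceI)
qed

lemma H0_prob: "prob_space (H0_space nR nT)"
  unfolding H0_space_def by (rule prob_space_PiM) (rule cgauss_prob)

lemma cnj_measurable[measurable]: "(cnj :: complex \<Rightarrow> complex) \<in> borel_measurable borel"
  by (intro borel_measurable_continuous_onI continuous_intros)

definition MM :: "'x measure \<Rightarrow> ('x \<Rightarrow> complex mat) \<Rightarrow> nat \<Rightarrow> nat \<Rightarrow> bool" where
  "MM M F r c \<longleftrightarrow> (\<forall>\<omega>. F \<omega> \<in> carrier_mat r c) \<and> (\<forall>i<r. \<forall>j<c. (\<lambda>\<omega>. F \<omega> $$ (i,j)) \<in> borel_measurable M)"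

lemma MM_const: "A \<in> carrier_mat r c \<Longrightarrow> MM M (\<lambda>_. A) r c"
  unfolding MM_def by simp

lemma MM_mult:
  assumes F: "MM M F r k" and G: "MM M G k c"
  shows "MM M (\<lambda>\<omega>. F \<omega> * G \<omega>) r c"
  unfolding MM_def
proof (intro conjI allI impI)
  fix \<omega> show "F \<omega> * G \<omega> \<in> carrier_mat r c" using F G unfolding MM_def by (meson mult_carrier_mat)
next
  fix i j assume i: "i < r" and j: "j < c"
  have "(\<lambda>\<omega>. (F \<omega> * G \<omega>) $$ (i,j)) = (\<lambda>\<omega>. \<Sum>l\<in>{0..<k}. F \<omega> $$ (i,l) * G \<omega> $$ (l,j))"
    using F G i j unfolding MM_def by (intro ext mult_entry) auto
  also have "\<dots> \<in> borel_measurable M"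
  proof (intro borel_measurable_sum borel_measurable_times)
    fix l assume "l \<in> {0..<k}"
    then show "(\<lambda>\<omega>. F \<omega> $$ (i,l)) \<in> borel_measurable M" "(\<lambda>\<omega>. G \<omega> $$ (l,j)) \<in> borel_measurable M"
      using F G i j unfolding MM_def by auto
  qed
  finally show "(\<lambda>\<omega>. (F \<omega> * G \<omega>) $$ (i,j)) \<in> borel_measurable M" .
qed

lemma MM_cadj:
  assumes F: "MM M F r c"
  shows "MM M (\<lambda>\<omega>. cadj (F \<omega>)) c r"
  unfolding MM_def
proof (intro conjI allI impI)
  fix \<omega> show "cadj (F \<omega>) \<in> carrier_mat c r" using F unfolding MM_def by simp
next
  fix i j assume i: "i < c" and j: "j < r"
  have "(\<lambda>\<omega>. cadj (F \<omega>) $$ (i,j)) = (\<lambda>\<omega>. cnj (F \<omega> $$ (j,i)))"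
  proof (rule ext)
    fix \<omega>
    have Fc: "F \<omega> \<in> carrier_mat r c" using F unfolding MM_def by auto
    show "cadj (F \<omega>) $$ (i,j) = cnj (F \<omega> $$ (j,i))" using Fc i j by simp
  qed
  also have "\<dots> \<in> borel_measurable M"
    using F i j unfolding MM_def by (intro measurable_compose[OF _ cnj_measurable]) auto
  finally show "(\<lambda>\<omega>. cadj (F \<omega>) $$ (i,j)) \<in> borel_measurable M" .
qed

lemma MM_add_smult:
  assumes F: "MM M F n n"
  shows "MM M (\<lambda>\<omega>. 1\<^sub>m n + a \<cdot>\<^sub>m F \<omega>) n n"
  unfolding MM_def
proof (intro conjI allI impI)
  fix \<omega> show "1\<^sub>m n + a \<cdot>\<^sub>m F \<omega> \<in> carrier_mat n n" using F unfolding MM_def by simp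
next
  fix i j assume i: "i < n" and j: "j < n"
  have "(\<lambda>\<omega>. (1\<^sub>m n + a \<cdot>\<^sub>m F \<omega>) $$ (i,j)) = (\<lambda>\<omega>. (if i = j then 1 else 0) + a * F \<omega> $$ (i,j))"
  proof (rule ext)
    fix \<omega>
    have Fc: "F \<omega> \<in> carrier_mat n n" using F unfolding MM_def by auto
    show "(1\<^sub>m n + a \<cdot>\<^sub>m F \<omega>) $$ (i,j) = (if i = j then 1 else 0) + a * F \<omega> $$ (i,j)" using Fc i j by simp
  qed
  also have "\<dots> \<in> borel_measurable M"
  proof (intro borel_measurable_add borel_measurable_times borel_measurable_const)
    show "(\<lambda>\<omega>. F \<omega> $$ (i,j)) \<in> borel_measurable M" using F i j unfolding MM_def by auto
  qed
  finally show "(\<lambda>\<omega>. (1\<^sub>m n + a \<cdot>\<^sub>m F \<omega>) $$ (i,j)) \<in> borel_measurable M" .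
qed

lemma MM_det:
  assumes F: "MM M F n n"
  shows "(\<lambda>\<omega>. det (F \<omega>)) \<in> borel_measurable M"
proof -
  have "(\<lambda>\<omega>. det (F \<omega>)) = (\<lambda>\<omega>. \<Sum>p\<in>{p. p permutes {0..<n}}. signof p * (\<Prod>i\<in>{0..<n}. F \<omega> $$ (i, p i)))"
  proof (rule ext)
    fix \<omega>
    have Fc: "F \<omega> \<in> carrier_mat n n" using F unfolding MM_def by auto
    show "det (F \<omega>) = (\<Sum>p\<in>{p. p permutes {0..<n}}. signof p * (\<Prod>i\<in>{0..<n}. F \<omega> $$ (i, p i)))"
      using det_def'[OF Fc] by simp
  qed
  also have "\<dots> \<in> borel_measurable M"
  proof (intro borel_measurable_sum borel_measurable_times borel_measurable_const borel_measurable_prod)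
    fix p i assume p: "p \<in> {p. p permutes {0..<n}}" and i: "i \<in> {0..<n}"
    then have "p i < n" by (simp add: permutes_in_image)
    then show "(\<lambda>\<omega>. F \<omega> $$ (i, p i)) \<in> borel_measurable M" using F i unfolding MM_def by auto
  qed
  finally show ?thesis .
qed

lemma MM_sumabs:
  assumes F: "MM M F n n"
  shows "(\<lambda>\<omega>. \<Sum>p<n. \<Sum>q<n. cmod (F \<omega> $$ (p,q))) \<in> borel_measurable M"
proof (intro borel_measurable_sum)
  fix p q assume p: "p \<in> {..<n}" and q: "q \<in> {..<n}"
  have "(\<lambda>\<omega>. F \<omega> $$ (p,q)) \<in> borel_measurable M" using F p q unfolding MM_def by auto
  then show "(\<lambda>\<omega>. cmod (F \<omega> $$ (p,q))) \<in> borel_measurable M" by measurable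
qed

lemma H0_comp_meas:
  assumes "i < nR" "j < nT"
  shows "(\<lambda>\<omega>. \<omega> (i,j)) \<in> borel_measurable (H0_space nR nT)"
proof -
  have "(\<lambda>\<omega>. \<omega> (i,j)) \<in> measurable (H0_space nR nT) cgauss"
    unfolding H0_space_def using assms by (intro measurable_component_singleton) auto
  moreover have "sets cgauss = sets borel" unfolding cgauss_def by simp
  ultimately show ?thesis using measurable_cong_sets by blast
qed

lemma MM_H0: "MM (H0_space nR nT) (H0_of nR nT) nR nT"
  unfolding MM_def H0_of_def using H0_comp_meas by simp

lemma MM_Theta:
  assumes T: "hpd_mat nT PhiT" and R: "hpd_mat nR PhiR"
  shows "MM (H0_space nR nT) (Theta_of nT nR PhiT PhiR) (min nT nR) (min nT nR)"
proof -
  have H: "MM (H0_space nR nT) (H_of nT nR PhiT PhiR) nR nT"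
    unfolding H_of_def
    by (rule MM_mult[OF MM_mult[OF MM_const[OF hpd_sqrt_carrier[OF R]] MM_H0] MM_const[OF hpd_sqrt_carrier[OF T]]])
  show ?thesis
  proof (cases "nR \<le> nT")
    case True
    then have "Theta_of nT nR PhiT PhiR = (\<lambda>\<omega>. H_of nT nR PhiT PhiR \<omega> * cadj (H_of nT nR PhiT PhiR \<omega>))"
      unfolding Theta_of_def by (simp add: Let_def)
    moreover have "min nT nR = nR" using True by simp
    ultimately show ?thesis using MM_mult[OF H MM_cadj[OF H]] by simp
  next
    case False
    then have "Theta_of nT nR PhiT PhiR = (\<lambda>\<omega>. cadj (H_of nT nR PhiT PhiR \<omega>) * H_of nT nR PhiT PhiR \<omega>)"
      unfolding Theta_of_def by (simp add: Let_def)
    moreover have "min nT nR = nT" using False by simp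
    ultimately show ?thesis using MM_mult[OF MM_cadj[OF H] H] by simp
  qed
qed


lemma mvt_quot:
  fixes g g' :: "real \<Rightarrow> real"
  assumes yb: "y \<noteq> b" and der: "\<And>x. \<bar>x - b\<bar> \<le> \<bar>y - b\<bar> \<Longrightarrow> (g has_real_derivative g' x) (at x)"
    and gb: "\<And>x. \<bar>x - b\<bar> \<le> \<bar>y - b\<bar> \<Longrightarrow> \<bar>g' x\<bar> \<le> K"
  shows "\<bar>(g y - g b) / (y - b)\<bar> \<le> K"
proof (cases "b < y")
  case True
  obtain z where z: "b < z" "z < y" "g y - g b = (y - b) * g' z"
    using MVT2[OF True, of g g'] der True by auto
  have "(g y - g b) / (y - b) = g' z" using z True by simp
  then show ?thesis using gb[of z] z True by simp
next
  case False
  then have yb': "y < b" using yb by simp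
  obtain z where z: "y < z" "z < b" "g b - g y = (b - y) * g' z"
    using MVT2[OF yb', of g g'] der yb' by auto
  have "g y - g b = (y - b) * g' z" using z(3) by (simp add: algebra_simps)
  then have "(g y - g b) / (y - b) = g' z" using yb' by simp
  then show ?thesis using gb[of z] z yb' by simp
qed

lemma deriv_integral:
  fixes f f' :: "real \<Rightarrow> 'x \<Rightarrow> real"
  assumes M: "finite_measure M" and d: "\<delta> > 0"
    and meas: "\<And>\<beta>. \<bar>\<beta> - b\<bar> < \<delta> \<Longrightarrow> f \<beta> \<in> borel_measurable M"
    and bnd: "\<And>\<beta> \<omega>. \<bar>\<beta> - b\<bar> < \<delta> \<Longrightarrow> \<omega> \<in> space M \<Longrightarrow> \<bar>f \<beta> \<omega>\<bar> \<le> B"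
    and der: "\<And>\<beta> \<omega>. \<bar>\<beta> - b\<bar> < \<delta> \<Longrightarrow> \<omega> \<in> space M \<Longrightarrow> ((\<lambda>\<beta>. f \<beta> \<omega>) has_real_derivative f' \<beta> \<omega>) (at \<beta>)"
    and dbnd: "\<And>\<beta> \<omega>. \<bar>\<beta> - b\<bar> < \<delta> \<Longrightarrow> \<omega> \<in> space M \<Longrightarrow> \<bar>f' \<beta> \<omega>\<bar> \<le> K"
  shows "((\<lambda>\<beta>. \<integral>\<omega>. f \<beta> \<omega> \<partial>M) has_real_derivative (\<integral>\<omega>. f' b \<omega> \<partial>M)) (at b)"
    and "f' b \<in> borel_measurable M"
proof -
  have intg: "integrable M (f \<beta>)" if "\<bar>\<beta> - b\<bar> < \<delta>" for \<beta>
    by (rule finite_measure.integrable_const_bound[OF M, where B=B]) (use that meas bnd in auto)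
  have pw: "(\<lambda>n. (f (y n) \<omega> - f b \<omega>) / (y n - b)) \<longlonglongrightarrow> f' b \<omega>"
    if y: "\<And>n. y n \<noteq> b" "y \<longlonglongrightarrow> b" and \<omega>: "\<omega> \<in> space M" for y \<omega>
  proof -
    have "((\<lambda>\<beta>. f \<beta> \<omega>) has_real_derivative f' b \<omega>) (at b)" using der[of b \<omega>] d \<omega> by simp
    then have "((\<lambda>x. (f x \<omega> - f b \<omega>) / (x - b)) \<longlongrightarrow> f' b \<omega>) (at b)"
      unfolding has_field_derivative_iff .
    then have "((\<lambda>x. (f x \<omega> - f b \<omega>) / (x - b)) \<circ> y) \<longlonglongrightarrow> f' b \<omega>"
      using y unfolding tendsto_at_iff_sequentially by blast
    then show ?thesis by (simp add: comp_def)
  qed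
  have qbnd: "\<bar>(f y \<omega> - f b \<omega>) / (y - b)\<bar> \<le> K" if y: "y \<noteq> b" "\<bar>y - b\<bar> < \<delta>" and \<omega>: "\<omega> \<in> space M" for y \<omega>
    by (rule mvt_quot[OF y(1), of "\<lambda>\<beta>. f \<beta> \<omega>" "\<lambda>\<beta>. f' \<beta> \<omega>"]) (use y \<omega> der dbnd in auto)
  have seq: "(\<lambda>n. ((\<integral>\<omega>. f (y n) \<omega> \<partial>M) - (\<integral>\<omega>. f b \<omega> \<partial>M)) / (y n - b)) \<longlonglongrightarrow> (\<integral>\<omega>. f' b \<omega> \<partial>M)
      \<and> f' b \<in> borel_measurable M"
    if y: "\<And>n. y n \<noteq> b" "\<And>n. \<bar>y n - b\<bar> < \<delta>" "y \<longlonglongrightarrow> b" for y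
  proof -
    define q where "q n \<omega> = (f (y n) \<omega> - f b \<omega>) / (y n - b)" for n \<omega>
    have qm: "q n \<in> borel_measurable M" for n
      unfolding q_def using meas[OF y(2)[of n]] meas[of b] d
      by (intro borel_measurable_divide borel_measurable_diff borel_measurable_const) auto
    have qlim: "(\<lambda>n. q n \<omega>) \<longlonglongrightarrow> f' b \<omega>" if "\<omega> \<in> space M" for \<omega>
      unfolding q_def by (rule pw[OF y(1) y(3) that])
    have fm: "f' b \<in> borel_measurable M" by (rule borel_measurable_LIMSEQ_real[OF qlim qm])
    have "(\<lambda>n. \<integral>\<omega>. q n \<omega> \<partial>M) \<longlonglongrightarrow> (\<integral>\<omega>. f' b \<omega> \<partial>M)"
    proof (rule integral_dominated_convergence[where w="\<lambda>_. K"])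
      show "f' b \<in> borel_measurable M" by (rule fm)
      show "q n \<in> borel_measurable M" for n by (rule qm)
      show "integrable M (\<lambda>_. K)" using M by (simp add: finite_measure.integrable_const)
      show "AE \<omega> in M. (\<lambda>n. q n \<omega>) \<longlonglongrightarrow> f' b \<omega>" using qlim by (intro AE_I2)
      show "AE \<omega> in M. norm (q n \<omega>) \<le> K" for n
        unfolding q_def using qbnd y by (intro AE_I2) auto
    qed
    moreover have "(\<integral>\<omega>. q n \<omega> \<partial>M) = ((\<integral>\<omega>. f (y n) \<omega> \<partial>M) - (\<integral>\<omega>. f b \<omega> \<partial>M)) / (y n - b)" for n
    proof -
      have "(\<integral>\<omega>. q n \<omega> \<partial>M) = (\<integral>\<omega>. (f (y n) \<omega> - f b \<omega>) \<partial>M) / (y n - b)"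
        unfolding q_def by simp
      also have "(\<integral>\<omega>. (f (y n) \<omega> - f b \<omega>) \<partial>M) = (\<integral>\<omega>. f (y n) \<omega> \<partial>M) - (\<integral>\<omega>. f b \<omega> \<partial>M)"
        by (rule Bochner_Integration.integral_diff) (use intg y(2) d in auto)
      finally show ?thesis .
    qed
    ultimately show ?thesis using fm by simp
  qed
  show "f' b \<in> borel_measurable M"
  proof -
    define y where "y n = b + \<delta> / real (n + 2)" for n
    have "(\<lambda>n. \<delta> / real n) \<longlonglongrightarrow> 0" by (rule lim_const_over_n)
    then have "(\<lambda>n. \<delta> / real (n + 2)) \<longlonglongrightarrow> 0" by (rule LIMSEQ_ignore_initial_segment)
    then have "(\<lambda>n. b + \<delta> / real (n + 2)) \<longlonglongrightarrow> b + 0" by (intro tendsto_add tendsto_const)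
    then have "y \<longlonglongrightarrow> b" unfolding y_def by simp
    moreover have "y n \<noteq> b" "\<bar>y n - b\<bar> < \<delta>" for n
    proof -
      have p: "\<delta> / real (n + 2) > 0" using d by simp
      have "\<delta> / real (n + 2) < \<delta> / 1" using d by (intro divide_strict_left_mono) auto
      then show "y n \<noteq> b" "\<bar>y n - b\<bar> < \<delta>" unfolding y_def using p by auto
    qed
    ultimately show ?thesis using seq by blast
  qed
  show "((\<lambda>\<beta>. \<integral>\<omega>. f \<beta> \<omega> \<partial>M) has_real_derivative (\<integral>\<omega>. f' b \<omega> \<partial>M)) (at b)"
    unfolding has_field_derivative_iff tendsto_at_iff_sequentially
  proof (intro allI impI)
    fix X :: "nat \<Rightarrow> real" assume X: "\<forall>i. X i \<in> UNIV - {b}" and Xl: "X \<longlonglongrightarrow> b"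
    obtain N where N: "\<forall>n\<ge>N. dist (X n) b < \<delta>" using Xl d unfolding lim_sequentially by blast
    define y where "y n = X (n + N)" for n
    have "y \<longlonglongrightarrow> b" unfolding y_def using Xl by (rule LIMSEQ_ignore_initial_segment)
    moreover have "y n \<noteq> b" "\<bar>y n - b\<bar> < \<delta>" for n unfolding y_def using X N by (auto simp: dist_real_def)
    ultimately have "(\<lambda>n. ((\<integral>\<omega>. f (y n) \<omega> \<partial>M) - (\<integral>\<omega>. f b \<omega> \<partial>M)) / (y n - b)) \<longlonglongrightarrow> (\<integral>\<omega>. f' b \<omega> \<partial>M)"
      using seq by blast
    then have "(\<lambda>n. ((\<lambda>x. ((\<integral>\<omega>. f x \<omega> \<partial>M) - (\<integral>\<omega>. f b \<omega> \<partial>M)) / (x - b)) \<circ> X) (n + N)) \<longlonglongrightarrow> (\<integral>\<omega>. f' b \<omega> \<partial>M)"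
      unfolding y_def by (simp add: comp_def)
    then show "((\<lambda>x. ((\<integral>\<omega>. f x \<omega> \<partial>M) - (\<integral>\<omega>. f b \<omega> \<partial>M)) / (x - b)) \<circ> X) \<longlonglongrightarrow> (\<integral>\<omega>. f' b \<omega> \<partial>M)"
      by (rule LIMSEQ_offset)
  qed
qed

definition psi :: "nat \<Rightarrow> real \<Rightarrow> (nat \<Rightarrow> real) \<Rightarrow> real \<Rightarrow> real" where
  "psi m c l \<beta> = (\<Sum>j\<in>{0..<m}. ln (1 + c * l j / \<beta>))"

definition phi :: "nat \<Rightarrow> real \<Rightarrow> real \<Rightarrow> (nat \<Rightarrow> real) \<Rightarrow> real \<Rightarrow> real" where
  "phi m a c l \<beta> = exp (- a * psi m c l \<beta>)"

definition dphi :: "nat \<Rightarrow> real \<Rightarrow> real \<Rightarrow> (nat \<Rightarrow> real) \<Rightarrow> real \<Rightarrow> real" where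
  "dphi m a c l \<beta> = phi m a c l \<beta> * (a * (\<Sum>j\<in>{0..<m}. c * l j / (\<beta> * (\<beta> + c * l j))))"

lemma psi_nonneg:
  assumes "c > 0" "\<forall>j. 0 \<le> l j" "\<beta> > 0"
  shows "0 \<le> psi m c l \<beta>"
  unfolding psi_def using assms by (intro sum_nonneg) simp

lemma phi_range:
  assumes "a \<ge> 0" "c > 0" "\<forall>j. 0 \<le> l j" "\<beta> > 0"
  shows "0 < phi m a c l \<beta> \<and> phi m a c l \<beta> \<le> 1"
  using psi_nonneg[OF assms(2-4), of m] assms(1) unfolding phi_def
  by (simp add: mult_nonneg_nonneg)

lemma ln_term_deriv:
  assumes "c > 0" "L \<ge> 0" "\<beta> > 0"
  shows "((\<lambda>x. ln (1 + c * L / x)) has_real_derivative (- (c * L / (\<beta> * (\<beta> + c * L))))) (at \<beta>)"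
proof -
  have cl: "0 \<le> c * L" using assms by simp
  have bcl: "\<beta> + c * L > 0" using assms cl by linarith
  have "((\<lambda>x. ln (x + c * L) - ln x) has_real_derivative (1 / (\<beta> + c * L) - 1 / \<beta>)) (at \<beta>)"
    using assms bcl by (auto intro!: derivative_eq_intros)
  also have "1 / (\<beta> + c * L) - 1 / \<beta> = - (c * L / (\<beta> * (\<beta> + c * L)))"
    using assms bcl by (simp add: field_simps)
  finally have D: "((\<lambda>x. ln (x + c * L) - ln x) has_real_derivative - (c * L / (\<beta> * (\<beta> + c * L)))) (at \<beta>)" .
  show ?thesis
  proof (rule has_field_derivative_transform_within_open[OF D, of "{0<..}"])
    show "open {0::real<..}" by simp
    show "\<beta> \<in> {0<..}" using assms by simp
    fix x :: real assume "x \<in> {0<..}"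
    then have x: "x > 0" by simp
    have "1 + c * L / x = (x + c * L) / x" using x by (simp add: field_simps)
    then show "ln (x + c * L) - ln x = ln (1 + c * L / x)"
      using x cl by (simp add: ln_div add_pos_nonneg)
  qed
qed

lemma phi_deriv:
  assumes "c > 0" "\<forall>j. 0 \<le> l j" "\<beta> > 0"
  shows "((\<lambda>x. phi m a c l x) has_real_derivative dphi m a c l \<beta>) (at \<beta>)"
proof -
  have "((\<lambda>x. psi m c l x) has_real_derivative (\<Sum>j\<in>{0..<m}. - (c * l j / (\<beta> * (\<beta> + c * l j))))) (at \<beta>)"
    unfolding psi_def by (rule DERIV_sum) (use ln_term_deriv assms in auto)
  then have "((\<lambda>x. exp (- a * psi m c l x)) has_real_derivative
      exp (- a * psi m c l \<beta>) * (- a * (\<Sum>j\<in>{0..<m}. - (c * l j / (\<beta> * (\<beta> + c * l j)))))) (at \<beta>)"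
    by (auto intro!: derivative_eq_intros)
  then show ?thesis unfolding phi_def[abs_def] dphi_def by (simp add: sum_negf)
qed

lemma dphi_bounds:
  assumes "a \<ge> 0" "c > 0" "\<forall>j. 0 \<le> l j" "\<beta> > 0"
  shows "0 \<le> dphi m a c l \<beta> \<and> dphi m a c l \<beta> \<le> a * m / \<beta>"
proof -
  have t: "0 \<le> c * l j / (\<beta> * (\<beta> + c * l j)) \<and> c * l j / (\<beta> * (\<beta> + c * l j)) \<le> 1 / \<beta>" for j
  proof -
    have lj: "0 \<le> l j" using assms by simp
    have cl: "0 \<le> c * l j" using assms lj by simp
    have hb: "0 < \<beta> + c * l j" using assms cl by linarith
    have e: "c * l j / (\<beta> * (\<beta> + c * l j)) = (1 / \<beta>) * (c * l j / (\<beta> + c * l j))" by simp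
    have le1: "c * l j / (\<beta> + c * l j) \<le> 1" using hb assms by (simp add: pos_divide_le_eq)
    have ge0: "0 \<le> c * l j / (\<beta> + c * l j)" using hb cl by simp
    have "(1 / \<beta>) * (c * l j / (\<beta> + c * l j)) \<le> 1 / \<beta>"
      using mult_left_le[OF le1, of "1 / \<beta>"] assms by simp
    moreover have "0 \<le> (1 / \<beta>) * (c * l j / (\<beta> + c * l j))" using ge0 assms by simp
    ultimately show ?thesis unfolding e by simp
  qed
  have S: "0 \<le> (\<Sum>j\<in>{0..<m}. c * l j / (\<beta> * (\<beta> + c * l j)))" using t by (simp add: sum_nonneg)
  have S2: "(\<Sum>j\<in>{0..<m}. c * l j / (\<beta> * (\<beta> + c * l j))) \<le> m * (1 / \<beta>)"
    using sum_mono[of "{0..<m}" "\<lambda>j. c * l j / (\<beta> * (\<beta> + c * l j))" "\<lambda>_. 1 / \<beta>"] t by simp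
  have P: "0 < phi m a c l \<beta>" "phi m a c l \<beta> \<le> 1" using phi_range[OF assms] by auto
  have "dphi m a c l \<beta> \<le> 1 * (a * (m * (1 / \<beta>)))"
    unfolding dphi_def using P S S2 assms(1) by (intro mult_mono mult_left_mono) auto
  moreover have "0 \<le> dphi m a c l \<beta>" unfolding dphi_def using P S assms(1) by simp
  ultimately show ?thesis by simp
qed

lemma phi_lower:
  assumes "a \<ge> 0" "c > 0" "\<forall>j. 0 \<le> l j" "\<beta> > 0" "\<beta> \<le> 1" "\<forall>j<m. l j \<le> L" "m > 0"
  shows "\<beta> powr (a * m) * (1 + c * L) powr (- (a * m)) \<le> phi m a c l \<beta>"
proof -
  have L0: "0 \<le> L" using assms(3,6,7) by (meson order_trans)
  have cL: "0 \<le> c * L" using L0 assms by simp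
  have "psi m c l \<beta> \<le> (\<Sum>j\<in>{0..<m}. ln (1 + c * L) - ln \<beta>)"
    unfolding psi_def
  proof (intro sum_mono)
    fix j assume j: "j \<in> {0..<m}"
    have lj: "0 \<le> l j" "l j \<le> L" using assms j by auto
    have cl: "0 \<le> c * l j" using lj assms by simp
    have "c * l j \<le> c * L" using lj assms by (simp add: mult_left_mono)
    then have "\<beta> + c * l j \<le> 1 + c * L" using assms by linarith
    then have "(\<beta> + c * l j) / \<beta> \<le> (1 + c * L) / \<beta>" using assms by (simp add: divide_right_mono)
    moreover have "1 + c * l j / \<beta> = (\<beta> + c * l j) / \<beta>" using assms by (simp add: field_simps)
    ultimately have le: "1 + c * l j / \<beta> \<le> (1 + c * L) / \<beta>" by simp
    have p1: "0 < 1 + c * l j / \<beta>" using cl assms by (simp add: add_pos_nonneg)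
    have p2: "0 < 1 + c * L" using cL by simp
    have "ln (1 + c * l j / \<beta>) \<le> ln ((1 + c * L) / \<beta>)"
      using le p1 p2 assms by (subst ln_le_cancel_iff) auto
    also have "\<dots> = ln (1 + c * L) - ln \<beta>" using assms p2 by (subst ln_div) auto
    finally show "ln (1 + c * l j / \<beta>) \<le> ln (1 + c * L) - ln \<beta>" .
  qed
  also have "\<dots> = m * (ln (1 + c * L) - ln \<beta>)" by simp
  finally have "- a * (m * (ln (1 + c * L) - ln \<beta>)) \<le> - a * psi m c l \<beta>"
    using assms(1) by (simp add: mult_left_mono)
  then have "exp (- a * (m * (ln (1 + c * L) - ln \<beta>))) \<le> phi m a c l \<beta>"
    unfolding phi_def by simp
  moreover have "exp (- a * (m * (ln (1 + c * L) - ln \<beta>))) = \<beta> powr (a * m) * (1 + c * L) powr (- (a * m))"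
  proof -
    have "1 + c * L > 0" using cL by simp
    then show ?thesis using assms
      by (simp add: powr_def exp_add[symmetric] algebra_simps)
  qed
  ultimately show ?thesis by simp
qed

lemma phi_det:
  assumes "c > 0" "\<forall>j. 0 \<le> l j" "\<beta> > 0"
  shows "(\<Prod>j\<in>{0..<m}. 1 + c / \<beta> * l j) powr (- a) = phi m a c l \<beta>"
proof -
  have pos: "0 < 1 + c / \<beta> * l j" for j using assms by (simp add: add_pos_nonneg)
  have pos': "1 + c * l j / \<beta> \<noteq> 0" for j using pos[of j] by simp
  have P: "(\<Prod>j\<in>{0..<m}. 1 + c / \<beta> * l j) > 0" by (rule prod_pos) (use pos in auto)
  have "ln (\<Prod>j\<in>{0..<m}. 1 + c / \<beta> * l j) = (\<Sum>j\<in>{0..<m}. ln (1 + c / \<beta> * l j))"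
    by (rule ln_prod) (use pos' in auto)
  also have "\<dots> = psi m c l \<beta>" unfolding psi_def by simp
  finally have "ln (\<Prod>j\<in>{0..<m}. 1 + c / \<beta> * l j) = psi m c l \<beta>" .
  then show ?thesis using P pos' unfolding phi_def powr_def by simp
qed


lemma integral_pos_prob:
  fixes f :: "'x \<Rightarrow> real"
  assumes M: "prob_space M" and I: "integrable M f" and pos: "\<And>\<omega>. \<omega> \<in> space M \<Longrightarrow> f \<omega> > 0"
  shows "(\<integral>\<omega>. f \<omega> \<partial>M) > 0"
proof -
  have nn: "AE \<omega> in M. 0 \<le> f \<omega>" using pos by (intro AE_I2) (simp add: less_imp_le)
  have ge: "(\<integral>\<omega>. f \<omega> \<partial>M) \<ge> 0" using nn by (rule integral_nonneg_AE)
  have "(\<integral>\<omega>. f \<omega> \<partial>M) \<noteq> 0"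
  proof
    assume "(\<integral>\<omega>. f \<omega> \<partial>M) = 0"
    then have "AE \<omega> in M. f \<omega> = 0" using integral_nonneg_eq_0_iff_AE[OF I nn] by simp
    moreover have "AE \<omega> in M. f \<omega> > 0" using pos by (intro AE_I2)
    ultimately have "AE \<omega> in M. False" by eventually_elim simp
    then show False using prob_space.AE_False[OF M] by simp
  qed
  then show ?thesis using ge by simp
qed

lemma H_carrier:
  assumes T: "hpd_mat nT PhiT" and R: "hpd_mat nR PhiR"
  shows "H_of nT nR PhiT PhiR \<omega> \<in> carrier_mat nR nT"
  unfolding H_of_def H0_of_def
  using mult_carrier_mat[OF mult_carrier_mat[OF hpd_sqrt_carrier[OF R], of "mat nR nT (\<lambda>ij. \<omega> ij)" nT]
      hpd_sqrt_carrier[OF T]] by simp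

lemma Theta_factor:
  assumes T: "hpd_mat nT PhiT" and R: "hpd_mat nR PhiR"
  shows "\<exists>l::nat \<Rightarrow> real. (\<forall>j. 0 \<le> l j)
     \<and> (\<forall>s::real. det (1\<^sub>m (min nT nR) + complex_of_real s \<cdot>\<^sub>m Theta_of nT nR PhiT PhiR \<omega>)
            = complex_of_real (\<Prod>j\<in>{0..<min nT nR}. 1 + s * l j))
     \<and> (\<forall>j<min nT nR. l j \<le> (\<Sum>p<min nT nR. \<Sum>q<min nT nR. cmod (Theta_of nT nR PhiT PhiR \<omega> $$ (p,q))))"
proof -
  define H where "H = H_of nT nR PhiT PhiR \<omega>"
  have Hc: "H \<in> carrier_mat nR nT" unfolding H_def by (rule H_carrier[OF T R])
  show ?thesis
  proof (cases "nR \<le> nT")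
    case True
    then have "Theta_of nT nR PhiT PhiR \<omega> = H * cadj H" "min nT nR = nR"
      unfolding Theta_of_def H_def by (simp_all add: Let_def)
    then show ?thesis using gram_factor[OF Hc] by simp
  next
    case False
    then have "Theta_of nT nR PhiT PhiR \<omega> = cadj H * cadj (cadj H)" "min nT nR = nT"
      unfolding Theta_of_def H_def by (simp_all add: Let_def)
    then show ?thesis using gram_factor[OF cadj_carrier[OF Hc]] by simp
  qed
qed

lemma main_rho:
  fixes nT nR Nc :: nat and PhiT PhiR :: "complex mat" and \<gamma> \<rho> :: real
  assumes nT: "nT > 0" and nR: "nR > 0" and T: "hpd_mat nT PhiT" and R: "hpd_mat nR PhiR"
    and g: "\<gamma> > 0" and Nc: "Nc > 0" and rho0: "0 \<le> \<rho>" and rho1: "\<rho> \<le> 1"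
  shows "(\<exists>b\<in>{0<..real nT}. \<forall>\<beta>\<in>{0<..real nT}.
            E0t nT nR PhiT PhiR \<gamma> Nc \<rho> \<beta> \<le> E0t nT nR PhiT PhiR \<gamma> Nc \<rho> b)
       \<and> (\<forall>b\<in>{0<..real nT}.
            (\<forall>\<beta>\<in>{0<..real nT}. E0t nT nR PhiT PhiR \<gamma> Nc \<rho> \<beta> \<le> E0t nT nR PhiT PhiR \<gamma> Nc \<rho> b)
            \<longrightarrow> ((E0t nT nR PhiT PhiR \<gamma> Nc \<rho>) has_real_derivative 0) (at b))"
proof -
  define E where "E = E0t nT nR PhiT PhiR \<gamma> Nc \<rho>"
  define M where "M = H0_space nR nT"
  define m where "m = min nT nR"
  define Th where "Th = Theta_of nT nR PhiT PhiR"
  define a where "a = real Nc * \<rho>"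
  define c where "c = \<gamma> / (1 + \<rho>)"
  define \<tau> where "\<tau> \<omega> = (\<Sum>p<m. \<Sum>q<m. cmod (Th \<omega> $$ (p,q)))" for \<omega>
  have Mprob: "prob_space M" unfolding M_def by (rule H0_prob)
  have Mfin: "finite_measure M" by (rule prob_space.finite_measure[OF Mprob])
  have MMT: "MM M Th m m" unfolding M_def Th_def m_def by (rule MM_Theta[OF T R])
  have m0: "m > 0" unfolding m_def using nT nR by simp
  have mnT: "m \<le> nT" unfolding m_def by simp
  have a0: "a \<ge> 0" unfolding a_def using rho0 by simp
  have c0: "c > 0" unfolding c_def using g rho0 by simp
  have "\<forall>\<omega>. \<exists>l::nat \<Rightarrow> real. (\<forall>j. 0 \<le> l j)
     \<and> (\<forall>s::real. det (1\<^sub>m m + complex_of_real s \<cdot>\<^sub>m Th \<omega>) = complex_of_real (\<Prod>j\<in>{0..<m}. 1 + s * l j))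
     \<and> (\<forall>j<m. l j \<le> \<tau> \<omega>)"
    unfolding m_def Th_def \<tau>_def using Theta_factor[OF T R] by blast
  then obtain lam where lam: "\<And>\<omega>. (\<forall>j. 0 \<le> lam \<omega> j)
     \<and> (\<forall>s::real. det (1\<^sub>m m + complex_of_real s \<cdot>\<^sub>m Th \<omega>) = complex_of_real (\<Prod>j\<in>{0..<m}. 1 + s * lam \<omega> j))
     \<and> (\<forall>j<m. lam \<omega> j \<le> \<tau> \<omega>)"
    by metis
  have lam0: "\<forall>j. 0 \<le> lam \<omega> j" for \<omega> using lam by blast
  define gf where "gf \<beta> \<omega> = Re (det (1\<^sub>m m + complex_of_real (\<gamma> / (\<beta> * (1 + \<rho>))) \<cdot>\<^sub>m Th \<omega>)) powr (- real Nc * \<rho>)" for \<beta> \<omega>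
  define F where "F \<beta> = (\<integral>\<omega>. gf \<beta> \<omega> \<partial>M)" for \<beta>
  have E_eq: "E = (\<lambda>\<beta>. (1 + \<rho>) * (real nT - \<beta>) + real nT * (1 + \<rho>) * ln (\<beta> / real nT) - (1 / real Nc) * ln (F \<beta>))"
    unfolding E_def E0t_def F_def gf_def M_def m_def Th_def by simp
  have gf_phi: "gf \<beta> \<omega> = phi m a c (lam \<omega>) \<beta>" if b: "\<beta> > 0" for \<beta> \<omega>
  proof -
    have s: "\<gamma> / (\<beta> * (1 + \<rho>)) = c / \<beta>" unfolding c_def by simp
    have d: "det (1\<^sub>m m + complex_of_real (c / \<beta>) \<cdot>\<^sub>m Th \<omega>) = complex_of_real (\<Prod>j\<in>{0..<m}. 1 + (c / \<beta>) * lam \<omega> j)"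
      using lam[of \<omega>] by blast
    have "gf \<beta> \<omega> = (\<Prod>j\<in>{0..<m}. 1 + c / \<beta> * lam \<omega> j) powr (- real Nc * \<rho>)"
      unfolding gf_def s d Re_complex_of_real ..
    also have "- real Nc * \<rho> = - a" unfolding a_def by simp
    finally have "gf \<beta> \<omega> = (\<Prod>j\<in>{0..<m}. 1 + c / \<beta> * lam \<omega> j) powr (- a)" .
    also have "\<dots> = phi m a c (lam \<omega>) \<beta>" by (rule phi_det[OF c0 lam0 b])
    finally show ?thesis .
  qed
  have gf_meas: "gf \<beta> \<in> borel_measurable M" for \<beta>
  proof -
    have "(\<lambda>\<omega>. det (1\<^sub>m m + complex_of_real (\<gamma> / (\<beta> * (1 + \<rho>))) \<cdot>\<^sub>m Th \<omega>)) \<in> borel_measurable M"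
      by (rule MM_det[OF MM_add_smult[OF MMT]])
    moreover have "(\<lambda>z::complex. Re z powr (- real Nc * \<rho>)) \<in> borel_measurable borel" by measurable
    ultimately show ?thesis unfolding gf_def[abs_def] by (rule measurable_compose)
  qed
  have gf_range: "0 < gf \<beta> \<omega> \<and> gf \<beta> \<omega> \<le> 1" if "\<beta> > 0" for \<beta> \<omega>
    using phi_range[OF a0 c0 lam0 that] gf_phi[OF that] by simp
  have gf_int: "integrable M (gf \<beta>)" if "\<beta> > 0" for \<beta>
  proof (rule finite_measure.integrable_const_bound[OF Mfin, where B=1])
    show "AE x in M. norm (gf \<beta> x) \<le> 1"
    proof (intro AE_I2)
      fix x show "norm (gf \<beta> x) \<le> 1" using gf_range[OF that, of x] by simp
    qed
  qed (rule gf_meas)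
  define F' where "F' \<beta> = (\<integral>\<omega>. dphi m a c (lam \<omega>) \<beta> \<partial>M)" for \<beta>
  have dF: "(F has_real_derivative F' b) (at b)" if b: "b > 0" for b
  proof -
    have hb: "\<beta> > b / 2" if "\<bar>\<beta> - b\<bar> < b / 2" for \<beta> using that by linarith
    have hb0: "\<beta> > 0" if "\<bar>\<beta> - b\<bar> < b / 2" for \<beta> using hb[OF that] b by linarith
    show ?thesis unfolding F_def F'_def
    proof (rule deriv_integral(1)[OF Mfin, of "b / 2" b gf 1 "\<lambda>\<beta> \<omega>. dphi m a c (lam \<omega>) \<beta>" "a * m / (b / 2)"])
      show "0 < b / 2" using b by simp
      show "gf \<beta> \<in> borel_measurable M" for \<beta> by (rule gf_meas)
      show "\<bar>gf \<beta> \<omega>\<bar> \<le> 1" if "\<bar>\<beta> - b\<bar> < b / 2" for \<beta> \<omega>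
        using gf_range[OF hb0[OF that], of \<omega>] by simp
      show "((\<lambda>\<beta>. gf \<beta> \<omega>) has_real_derivative dphi m a c (lam \<omega>) \<beta>) (at \<beta>)"
        if "\<bar>\<beta> - b\<bar> < b / 2" for \<beta> \<omega>
      proof (rule has_field_derivative_transform_within_open[OF phi_deriv[OF c0 lam0 hb0[OF that]], of "{0<..}"])
        show "open {0::real<..}" by simp
        show "\<beta> \<in> {0<..}" using hb0[OF that] by simp
        show "phi m a c (lam \<omega>) x = gf x \<omega>" if "x \<in> {0<..}" for x using gf_phi[of x \<omega>] that by simp
      qed
      show "\<bar>dphi m a c (lam \<omega>) \<beta>\<bar> \<le> a * m / (b / 2)" if "\<bar>\<beta> - b\<bar> < b / 2" for \<beta> \<omega>
      proof -
        have db: "0 \<le> dphi m a c (lam \<omega>) \<beta> \<and> dphi m a c (lam \<omega>) \<beta> \<le> a * m / \<beta>"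
          by (rule dphi_bounds[OF a0 c0 lam0 hb0[OF that]])
        have "a * m / \<beta> \<le> a * m / (b / 2)"
          using hb[OF that] b a0 by (intro divide_left_mono) auto
        then show ?thesis using db by simp
      qed
    qed
  qed
  have F'nn: "F' b \<ge> 0" if b: "b > 0" for b
    unfolding F'_def by (rule integral_nonneg_AE, rule AE_I2) (use dphi_bounds[OF a0 c0 lam0 b] in blast)
  have Fpos: "F b > 0" if b: "b > 0" for b
    unfolding F_def by (rule integral_pos_prob[OF Mprob gf_int[OF b]]) (use gf_range[OF b] in blast)
  define E' where "E' b = (1 + \<rho>) * (- 1) + (real nT * (1 + \<rho>)) * (1 / b) - (1 / real Nc) * ((1 / F b) * F' b)" for b
  have dE: "(E has_real_derivative E' b) (at b)" if b: "b > 0" for b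
  proof -
    have d1: "((\<lambda>\<beta>. real nT - \<beta>) has_real_derivative - 1) (at b)"
      using DERIV_diff[OF DERIV_const[of "real nT"] DERIV_ident] by simp
    have d2a: "((\<lambda>\<beta>. \<beta> / real nT) has_real_derivative 1 / real nT) (at b)"
      using DERIV_cdivide[OF DERIV_ident, of "real nT"] by simp
    have d2: "((\<lambda>\<beta>. ln (\<beta> / real nT)) has_real_derivative 1 / b) (at b)"
    proof -
      have "((\<lambda>\<beta>. ln (\<beta> / real nT)) has_real_derivative (1 / (b / real nT)) * (1 / real nT)) (at b)"
        by (rule DERIV_chain2[OF DERIV_ln_divide d2a]) (use b nT in simp)
      moreover have "(1 / (b / real nT)) * (1 / real nT) = 1 / b" using nT b by simp
      ultimately show ?thesis by simp
    qed
    have d3: "((\<lambda>\<beta>. ln (F \<beta>)) has_real_derivative (1 / F b) * F' b) (at b)"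
      by (rule DERIV_chain2[OF DERIV_ln_divide[OF Fpos[OF b]] dF[OF b]])
    show ?thesis unfolding E_eq E'_def
      by (intro DERIV_diff DERIV_add DERIV_cmult d1 d2 d3)
  qed
  have tau_meas: "\<tau> \<in> borel_measurable M" unfolding \<tau>_def[abs_def] by (rule MM_sumabs[OF MMT])
  have tau0: "\<tau> \<omega> \<ge> 0" for \<omega> unfolding \<tau>_def by (simp add: sum_nonneg)
  define w where "w \<omega> = (1 + c * \<tau> \<omega>) powr (- (a * m))" for \<omega>
  have w_range: "0 < w \<omega> \<and> w \<omega> \<le> 1" for \<omega>
  proof -
    have x1: "1 \<le> 1 + c * \<tau> \<omega>" using c0 tau0[of \<omega>] by simp
    have am: "0 \<le> a * m" using a0 by simp
    have "1 \<le> (1 + c * \<tau> \<omega>) powr (a * m)" by (rule ge_one_powr_ge_zero[OF x1 am])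
    moreover have "w \<omega> = 1 / (1 + c * \<tau> \<omega>) powr (a * m)" unfolding w_def
      using x1 by (simp add: powr_minus_divide)
    moreover have "1 + c * \<tau> \<omega> \<noteq> 0" using x1 by simp
    ultimately show ?thesis by simp
  qed
  have w_meas: "w \<in> borel_measurable M"
  proof -
    have "(\<lambda>x::real. (1 + c * x) powr (- (a * m))) \<in> borel_measurable borel" by measurable
    then show ?thesis unfolding w_def[abs_def] using measurable_compose[OF tau_meas] by blast
  qed
  have w_int: "integrable M w"
  proof (rule finite_measure.integrable_const_bound[OF Mfin, where B=1])
    show "AE x in M. norm (w x) \<le> 1"
    proof (intro AE_I2)
      fix x show "norm (w x) \<le> 1" using w_range[of x] by simp
    qed
  qed (rule w_meas)
  define K0 where "K0 = (\<integral>\<omega>. w \<omega> \<partial>M)"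
  have K0pos: "K0 > 0" unfolding K0_def by (rule integral_pos_prob[OF Mprob w_int]) (use w_range in blast)
  have Flow: "\<beta> powr (a * m) * K0 \<le> F \<beta>" if b0: "0 < \<beta>" and b1: "\<beta> \<le> 1" for \<beta>
  proof -
    have "\<beta> powr (a * m) * K0 = (\<integral>\<omega>. \<beta> powr (a * m) * w \<omega> \<partial>M)"
      unfolding K0_def by simp
    also have "\<dots> \<le> (\<integral>\<omega>. gf \<beta> \<omega> \<partial>M)"
    proof (rule integral_mono)
      show "integrable M (\<lambda>\<omega>. \<beta> powr (a * m) * w \<omega>)" using w_int by simp
      show "integrable M (gf \<beta>)" by (rule gf_int[OF b0])
      fix \<omega> assume "\<omega> \<in> space M"
      have lt: "\<forall>j<m. lam \<omega> j \<le> \<tau> \<omega>" using lam[of \<omega>] by blast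
      show "\<beta> powr (a * m) * w \<omega> \<le> gf \<beta> \<omega>"
        unfolding w_def gf_phi[OF b0] by (rule phi_lower[OF a0 c0 lam0 b0 b1 lt m0])
    qed
    finally show ?thesis unfolding F_def .
  qed
  define A0 where "A0 = (1 + \<rho>) * real nT - real nT * (1 + \<rho>) * ln (real nT) - ln K0 / real Nc"
  define B where "B = real nT * (1 + \<rho>) - \<rho> * real m"
  have Bpos: "B > 0"
  proof -
    have "\<rho> * real m \<le> \<rho> * real nT" using rho0 mnT by (simp add: mult_left_mono)
    then have "B \<ge> real nT" unfolding B_def by (simp add: algebra_simps)
    then show ?thesis using nT by simp
  qed
  have Eup: "E \<beta> \<le> A0 + B * ln \<beta>" if b0: "0 < \<beta>" and b1: "\<beta> \<le> 1" for \<beta>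
  proof -
    have Fp: "F \<beta> > 0" by (rule Fpos[OF b0])
    have lp: "0 < \<beta> powr (a * m) * K0" using K0pos b0 by simp
    have "ln (\<beta> powr (a * m) * K0) \<le> ln (F \<beta>)" using Flow[OF b0 b1] lp Fp by simp
    moreover have "ln (\<beta> powr (a * m) * K0) = a * m * ln \<beta> + ln K0"
      using b0 K0pos by (simp add: ln_mult ln_powr)
    ultimately have lF: "a * m * ln \<beta> + ln K0 \<le> ln (F \<beta>)" by simp
    have Ncp: "real Nc > 0" using Nc by simp
    have "(1 / real Nc) * (a * m * ln \<beta> + ln K0) \<le> (1 / real Nc) * ln (F \<beta>)"
      using lF Ncp by (intro mult_left_mono) auto
    moreover have "(1 / real Nc) * (a * m * ln \<beta> + ln K0) = \<rho> * m * ln \<beta> + ln K0 / real Nc"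
      unfolding a_def using Ncp by (simp add: field_simps)
    ultimately have lF2: "\<rho> * m * ln \<beta> + ln K0 / real Nc \<le> (1 / real Nc) * ln (F \<beta>)" by simp
    have lnb: "ln (\<beta> / real nT) = ln \<beta> - ln (real nT)" using b0 nT by (simp add: ln_div)
    have t1: "(1 + \<rho>) * (real nT - \<beta>) \<le> (1 + \<rho>) * real nT" using rho0 b0 by simp
    have "E \<beta> = (1 + \<rho>) * (real nT - \<beta>) + real nT * (1 + \<rho>) * (ln \<beta> - ln (real nT)) - (1 / real Nc) * ln (F \<beta>)"
      unfolding E_eq lnb by simp
    also have "\<dots> \<le> (1 + \<rho>) * real nT + real nT * (1 + \<rho>) * (ln \<beta> - ln (real nT)) - (\<rho> * m * ln \<beta> + ln K0 / real Nc)"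
      using t1 lF2 by linarith
    also have "\<dots> = A0 + B * ln \<beta>" unfolding A0_def B_def by (simp add: algebra_simps)
    finally show ?thesis .
  qed
  define \<epsilon> where "\<epsilon> = min 1 (min (real nT) (exp ((E (real nT) - A0) / B)))"
  have eps0: "\<epsilon> > 0" unfolding \<epsilon>_def using nT by simp
  have epsn: "\<epsilon> \<le> real nT" unfolding \<epsilon>_def by simp
  have small: "E \<beta> < E (real nT)" if b0: "0 < \<beta>" and be: "\<beta> < \<epsilon>" for \<beta>
  proof -
    have b1: "\<beta> \<le> 1" using be unfolding \<epsilon>_def by simp
    have "\<beta> < exp ((E (real nT) - A0) / B)" using be unfolding \<epsilon>_def by simp
    then have "ln \<beta> < ln (exp ((E (real nT) - A0) / B))" using b0 by (subst ln_less_cancel_iff) auto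
    then have "ln \<beta> < (E (real nT) - A0) / B" by simp
    then have "B * ln \<beta> < E (real nT) - A0" using Bpos by (simp add: pos_less_divide_eq mult.commute)
    then show ?thesis using Eup[OF b0 b1] by simp
  qed
  have cont: "continuous_on {\<epsilon>..real nT} E"
  proof (rule continuous_at_imp_continuous_on, intro ballI)
    fix x assume "x \<in> {\<epsilon>..real nT}"
    then have "x > 0" using eps0 by simp
    then show "isCont E x" by (rule DERIV_isCont[OF dE])
  qed
  obtain bm where bm: "bm \<in> {\<epsilon>..real nT}" "\<forall>y\<in>{\<epsilon>..real nT}. E y \<le> E bm"
    using continuous_attains_sup[OF compact_Icc _ cont] epsn by auto
  have exist: "\<exists>b\<in>{0<..real nT}. \<forall>\<beta>\<in>{0<..real nT}. E \<beta> \<le> E b"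
  proof (intro bexI ballI)
    show "bm \<in> {0<..real nT}" using bm(1) eps0 by simp
    fix \<beta> assume \<beta>: "\<beta> \<in> {0<..real nT}"
    show "E \<beta> \<le> E bm"
    proof (cases "\<beta> < \<epsilon>")
      case True
      have "E \<beta> < E (real nT)" using small True \<beta> by simp
      moreover have "E (real nT) \<le> E bm" using bm(2) epsn by simp
      ultimately show ?thesis by simp
    next
      case False
      then show ?thesis using bm(2) \<beta> by simp
    qed
  qed
  have crit: "(E has_real_derivative 0) (at b)"
    if b: "b \<in> {0<..real nT}" and mx: "\<forall>\<beta>\<in>{0<..real nT}. E \<beta> \<le> E b" for b
  proof -
    have b0: "b > 0" using b by simp
    have D: "(E has_real_derivative E' b) (at b)" by (rule dE[OF b0])
    have "E' b = 0"
    proof (cases "b < real nT")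
      case True
      show ?thesis
      proof (rule DERIV_local_max[OF D, of "min b (real nT - b)"])
        show "0 < min b (real nT - b)" using b0 True by simp
        show "\<forall>y. \<bar>b - y\<bar> < min b (real nT - b) \<longrightarrow> E y \<le> E b"
        proof (intro allI impI)
          fix y assume "\<bar>b - y\<bar> < min b (real nT - b)"
          then have "y \<in> {0<..real nT}" by (simp add: abs_less_iff)
          then show "E y \<le> E b" using mx by blast
        qed
      qed
    next
      case False
      then have bn: "b = real nT" using b by simp
      have "E' b = - (1 / real Nc) * ((1 / F b) * F' b)"
        unfolding E'_def bn using nT by (simp add: field_simps)
      moreover have "0 \<le> (1 / F b) * F' b" using Fpos[OF b0] F'nn[OF b0] by simp
      moreover have "0 \<le> 1 / real Nc" by simp
      ultimately have le: "E' b \<le> 0" by (metis mult_nonneg_nonneg neg_le_0_iff_le mult_minus_left)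
      have "\<not> E' b < 0"
      proof
        assume "E' b < 0"
        then obtain d where d: "d > 0" "\<forall>h>0. h < d \<longrightarrow> E b < E (b - h)"
          using DERIV_neg_dec_left[OF D] by blast
        define h where "h = min d b / 2"
        have h: "h > 0" "h < d" "h < b" unfolding h_def using d b0 by auto
        then have "E b < E (b - h)" using d by simp
        moreover have "E (b - h) \<le> E b" using mx h b by simp
        ultimately show False by simp
      qed
      then show ?thesis using le by simp
    qed
    then show ?thesis using D by simp
  qed
  show ?thesis using exist crit unfolding E_def by blast
qed


theorem proposition2:
  fixes nT nR Nc :: nat and PhiT PhiR :: "complex mat" and \<gamma> :: real
  assumes "nT > 0" and "nR > 0"
    and "hpd_mat nT PhiT" and "hpd_mat nR PhiR"
    and "\<gamma> > 0" and "Nc > 0"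
  shows "\<forall>\<rho> \<in> {0..1}.
     (\<exists>b \<in> {0<..real nT}. \<forall>\<beta> \<in> {0<..real nT}.
         E0t nT nR PhiT PhiR \<gamma> Nc \<rho> \<beta> \<le> E0t nT nR PhiT PhiR \<gamma> Nc \<rho> b) \<and>
     (\<forall>b \<in> {0<..real nT}.
        (\<forall>\<beta> \<in> {0<..real nT}. E0t nT nR PhiT PhiR \<gamma> Nc \<rho> \<beta> \<le> E0t nT nR PhiT PhiR \<gamma> Nc \<rho> b)
        \<longrightarrow> ((E0t nT nR PhiT PhiR \<gamma> Nc \<rho>) has_real_derivative 0) (at b))"
proof (intro ballI)
  fix \<rho> :: real assume "\<rho> \<in> {0..1}"
  then have r0: "0 \<le> \<rho>" and r1: "\<rho> \<le> 1" by auto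
  show "(\<exists>b \<in> {0<..real nT}. \<forall>\<beta> \<in> {0<..real nT}.
         E0t nT nR PhiT PhiR \<gamma> Nc \<rho> \<beta> \<le> E0t nT nR PhiT PhiR \<gamma> Nc \<rho> b) \<and>
     (\<forall>b \<in> {0<..real nT}.
        (\<forall>\<beta> \<in> {0<..real nT}. E0t nT nR PhiT PhiR \<gamma> Nc \<rho> \<beta> \<le> E0t nT nR PhiT PhiR \<gamma> Nc \<rho> b)
        \<longrightarrow> ((E0t nT nR PhiT PhiR \<gamma> Nc \<rho>) has_real_derivative 0) (at b))"
    by (rule main_rho[OF assms r0 r1])
qed

end
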